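(* Let $(G,S)$ and $(H,T)$ be finitely generated groups with finite generating sets, such that there exists a snake embedding $\phi:G\to H$ (from $(G,S)$ to $(H,T)$). Then the infinite snake problem (resp. the ouroboros problem) for $(G,S)$ many-one reduces to the infinite snake problem (resp. the ouroboros problem) for $(H,T)$.
   Context: An invertible-reversible transducer is a tuple $\mathcal M=(Q,S,T,q_0,\delta,\eta)$ with $Q$ a finite set of states, $q_0\in Q$, $\delta:Q\times S\to Q$, $\eta:Q\times S\to T$ with $\eta(q,\cdot)$ injective for every $q$, and such that for all $q\in Q$, $s\in S$ there is a unique $q'$ with $\delta(q',s)=q$. One extends by $\eta(q,s^{-1})=\eta(q',s)^{-1}$ and $\delta(q,s^{-1})=q'$ where $q'$ is the unique state with $\delta(q',s)=q$. For $w\in(S\cup S^{-1})^*$, $q_w$ is the state reached from $q_0$ after reading $w$, and $f_{\mathcal M}:(S\cup S^{-1})^*\to(T\cup T^{-1})^*$ is defined by $f_{\mathcal M}(\epsilon)=\epsilon$, $f_{\mathcal M}(ws^{\pm1})=f_{\mathcal M}(w)\eta(q_w,s^{\pm1})$. A map $\phi:G\to H$ is a snake embedding if there is such a transducer with $\phi(g)=\overline{f_{\mathcal M}(w)}$ for every word $w$ representing $g$, and $f_{\mathcal M}(w)=_H f_{\mathcal M}(w')$ iff $w=_G w'$. A tileset graph for $(G,S)$ is a finite multigraph $\Gamma=(A,B)$ with edges $(a,a',s)$, $a,a'\in A$, $s\in S\cup S^{-1}$, with $(a,a',s)\in B\Rightarrow(a',a,s^{-1})\in B$. A $\Gamma$-snake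 on $I\subseteq\mathbb{Z}$ ($I=\mathbb{Z}$, $\mathbb{N}$ or an interval) is $(\omega,\zeta)$, $\omega:I\to G$ injective, $\zeta:I\to A$, with $d\omega_i:=\omega(i)^{-1}\omega(i+1)\in S\cup S^{-1}$ and $(\zeta(i),\zeta(i+1),d\omega_i)\in B$ whenever $i,i+1\in I$. A $\Gamma$-ouroboros is such a pair on $\{0,\dots,n\}$, $n\ge3$, with $\omega$ injective on $\{0,\dots,n-1\}$ and $\omega(n)=\omega(0)$. The infinite snake problem (resp. ouroboros problem) for a group with generating set: given a tileset graph $\Gamma$, decide whether a $\Gamma$-snake on $\mathbb{Z}$ (resp. a $\Gamma$-ouroboros) exists. *)

theory Defs
  imports "HOL-Algebra.Generated_Groups" "HOL-Library.Nat_Bijection"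
begin

datatype recf = Zer | Succ | Proj nat | Comp recf "recf list" | Prim recf recf | Minim recf

inductive reval :: "recf \<Rightarrow> nat list \<Rightarrow> nat \<Rightarrow> bool" where
  zer: "reval Zer xs 0"
| succ: "reval Succ (x # xs) (Suc x)"
| proj: "i < length xs \<Longrightarrow> reval (Proj i) xs (xs ! i)"
| comp: "length ys = length gs \<Longrightarrow> (\<forall>j < length gs. reval (gs ! j) xs (ys ! j))
          \<Longrightarrow> reval f ys z \<Longrightarrow> reval (Comp f gs) xs z"
| prim0: "reval f xs y \<Longrightarrow> reval (Prim f g) (0 # xs) y"
| primS: "reval (Prim f g) (n # xs) y \<Longrightarrow> reval g (n # y # xs) z
          \<Longrightarrow> reval (Prim f g) (Suc n # xs) z"
| minim: "reval f (n # xs) 0 \<Longrightarrow> (\<forall>m < n. \<exists>y. reval f (m # xs) y \<and> 0 < y)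
          \<Longrightarrow> reval (Minim f) xs n"

definition computable :: "(nat \<Rightarrow> nat) \<Rightarrow> bool" where
  "computable f \<longleftrightarrow> (\<exists>r. \<forall>n. reval r [n] (f n))"

definition m_reducible :: "nat set \<Rightarrow> nat set \<Rightarrow> bool" where
  "m_reducible A B \<longleftrightarrow> (\<exists>f. computable f \<and> (\<forall>n. n \<in> A \<longleftrightarrow> f n \<in> B))"

text \<open>A finite generating set is given as a distinct list S of generators.
  A letter is a pair (i, b): (i, True) stands for S!i, (i, False) for its inverse.\<close>

definition fg_group :: "('g, 'a) monoid_scheme \<Rightarrow> 'g list \<Rightarrow> bool" where
  "fg_group G S \<longleftrightarrow> group G \<and> distinct S \<and> set S \<subseteq> carrier G \<and> generate G (set S) = carrier G"

definition lval :: "('g, 'a) monoid_scheme \<Rightarrow> 'g list \<Rightarrow> nat \<times> bool \<Rightarrow> 'g" where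
  "lval G S l = (if snd l then S ! fst l else inv\<^bsub>G\<^esub> (S ! fst l))"

definition word_val :: "('g, 'a) monoid_scheme \<Rightarrow> 'g list \<Rightarrow> (nat \<times> bool) list \<Rightarrow> 'g" where
  "word_val G S w = foldr (\<lambda>l x. lval G S l \<otimes>\<^bsub>G\<^esub> x) w \<one>\<^bsub>G\<^esub>"

definition words :: "nat \<Rightarrow> (nat \<times> bool) list set" where
  "words k = {w. \<forall>l \<in> set w. fst l < k}"

text \<open>States are natural numbers in a finite set Q; generators of S (resp. T) are
  referred to by their indices < k (resp. < m).\<close>

definition is_irt :: "nat \<Rightarrow> nat \<Rightarrow> nat set \<Rightarrow> nat \<Rightarrow> (nat \<Rightarrow> nat \<Rightarrow> nat) \<Rightarrow> (nat \<Rightarrow> nat \<Rightarrow> nat) \<Rightarrow> bool" where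
  "is_irt k m Q q0 \<delta> \<eta> \<longleftrightarrow> finite Q \<and> q0 \<in> Q
     \<and> (\<forall>q \<in> Q. \<forall>s < k. \<delta> q s \<in> Q \<and> \<eta> q s < m)
     \<and> (\<forall>q \<in> Q. inj_on (\<eta> q) {..<k})
     \<and> (\<forall>q \<in> Q. \<forall>s < k. \<exists>!q'. q' \<in> Q \<and> \<delta> q' s = q)"

definition dpred :: "nat set \<Rightarrow> (nat \<Rightarrow> nat \<Rightarrow> nat) \<Rightarrow> nat \<Rightarrow> nat \<Rightarrow> nat" where
  "dpred Q \<delta> q s = (THE q'. q' \<in> Q \<and> \<delta> q' s = q)"

definition dstep :: "nat set \<Rightarrow> (nat \<Rightarrow> nat \<Rightarrow> nat) \<Rightarrow> nat \<Rightarrow> nat \<times> bool \<Rightarrow> nat" where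
  "dstep Q \<delta> q l = (if snd l then \<delta> q (fst l) else dpred Q \<delta> q (fst l))"

definition estep :: "nat set \<Rightarrow> (nat \<Rightarrow> nat \<Rightarrow> nat) \<Rightarrow> (nat \<Rightarrow> nat \<Rightarrow> nat) \<Rightarrow> nat \<Rightarrow> nat \<times> bool \<Rightarrow> nat \<times> bool" where
  "estep Q \<delta> \<eta> q l = (if snd l then (\<eta> q (fst l), True)
                       else (\<eta> (dpred Q \<delta> q (fst l)) (fst l), False))"

text \<open>frun Q delta eta q w is the output of the transducer started in state q on w;
  f_M(w) = frun Q delta eta q0 w.\<close>
fun frun :: "nat set \<Rightarrow> (nat \<Rightarrow> nat \<Rightarrow> nat) \<Rightarrow> (nat \<Rightarrow> nat \<Rightarrow> nat) \<Rightarrow> nat \<Rightarrow> (nat \<times> bool) list \<Rightarrow> (nat \<times> bool) list" where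
  "frun Q \<delta> \<eta> q [] = []"
| "frun Q \<delta> \<eta> q (l # w) = estep Q \<delta> \<eta> q l # frun Q \<delta> \<eta> (dstep Q \<delta> q l) w"

definition snake_embedding :: "('g, 'a) monoid_scheme \<Rightarrow> 'g list \<Rightarrow> ('h, 'b) monoid_scheme \<Rightarrow> 'h list \<Rightarrow> ('g \<Rightarrow> 'h) \<Rightarrow> bool" where
  "snake_embedding G S H T \<phi> \<longleftrightarrow> (\<exists>Q q0 \<delta> \<eta>. is_irt (length S) (length T) Q q0 \<delta> \<eta>
     \<and> (\<forall>w \<in> words (length S). \<phi> (word_val G S w) = word_val H T (frun Q \<delta> \<eta> q0 w))
     \<and> (\<forall>w \<in> words (length S). \<forall>w' \<in> words (length S).
          word_val H T (frun Q \<delta> \<eta> q0 w) = word_val H T (frun Q \<delta> \<eta> q0 w')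
          \<longleftrightarrow> word_val G S w = word_val G S w'))"

text \<open>A natural number n encodes the list of edges (a, a', c) obtained by decoding n
  with list_decode and each entry with nested prod_decode. Tiles are natural numbers,
  c is a letter code: c encodes the letter (c div 2, even c), i.e. the group element
  S!(c div 2) if c is even and its inverse if c is odd.\<close>

definition code_letter :: "nat \<Rightarrow> nat \<times> bool" where
  "code_letter c = (c div 2, even c)"

definition flip_code :: "nat \<Rightarrow> nat" where
  "flip_code c = (if even c then c + 1 else c - 1)"

definition tedges :: "nat \<Rightarrow> (nat \<times> nat \<times> nat) list" where
  "tedges n = map (\<lambda>e. (fst (prod_decode e), prod_decode (snd (prod_decode e)))) (list_decode n)"

definition valid_tcode :: "nat \<Rightarrow> nat \<Rightarrow> bool" where
  "valid_tcode k n \<longleftrightarrow> (\<forall>(a, a', c) \<in> set (tedges n). c < 2 * k \<and> (a', a, flip_code c) \<in> set (tedges n))"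

definition has_infinite_snake :: "('g, 'a) monoid_scheme \<Rightarrow> 'g list \<Rightarrow> nat \<Rightarrow> bool" where
  "has_infinite_snake G S n \<longleftrightarrow> (\<exists>(\<omega> :: int \<Rightarrow> 'g) (\<zeta> :: int \<Rightarrow> nat).
     inj \<omega> \<and> range \<omega> \<subseteq> carrier G
     \<and> (\<forall>i. \<exists>c. (\<zeta> i, \<zeta> (i + 1), c) \<in> set (tedges n)
              \<and> inv\<^bsub>G\<^esub> (\<omega> i) \<otimes>\<^bsub>G\<^esub> \<omega> (i + 1) = lval G S (code_letter c)))"

definition has_ouroboros :: "('g, 'a) monoid_scheme \<Rightarrow> 'g list \<Rightarrow> nat \<Rightarrow> bool" where
  "has_ouroboros G S n \<longleftrightarrow> (\<exists>N \<ge> 3. \<exists>(\<omega> :: nat \<Rightarrow> 'g) (\<zeta> :: nat \<Rightarrow> nat).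
     inj_on \<omega> {..<N} \<and> \<omega> N = \<omega> 0 \<and> (\<forall>i \<le> N. \<omega> i \<in> carrier G)
     \<and> (\<forall>i < N. \<exists>c. (\<zeta> i, \<zeta> (i + 1), c) \<in> set (tedges n)
              \<and> inv\<^bsub>G\<^esub> (\<omega> i) \<otimes>\<^bsub>G\<^esub> \<omega> (i + 1) = lval G S (code_letter c)))"

definition infinite_snake_problem :: "('g, 'a) monoid_scheme \<Rightarrow> 'g list \<Rightarrow> nat set" where
  "infinite_snake_problem G S = {n. valid_tcode (length S) n \<and> has_infinite_snake G S n}"

definition ouroboros_problem :: "('g, 'a) monoid_scheme \<Rightarrow> 'g list \<Rightarrow> nat set" where
  "ouroboros_problem G S = {n. valid_tcode (length S) n \<and> has_ouroboros G S n}"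

end

theory Submission
  imports Defs
begin

definition rf :: "nat \<Rightarrow> (nat list \<Rightarrow> nat) \<Rightarrow> bool" where
  "rf n f \<longleftrightarrow> (\<exists>r. \<forall>xs. length xs = n \<longrightarrow> reval r xs (f xs))"

lemma rf_cong: "rf n f \<Longrightarrow> (\<And>xs. length xs = n \<Longrightarrow> f xs = g xs) \<Longrightarrow> rf n g"
  unfolding rf_def by metis

lemma rf_const: "rf n (\<lambda>_. c)"
proof (induction c)
  case 0 show ?case unfolding rf_def by (auto intro: reval.zer)
next
  case (Suc c)
  then obtain r where r: "\<forall>xs. length xs = n \<longrightarrow> reval r xs c" unfolding rf_def by auto
  have "reval (Comp Succ [r]) xs (Suc c)" if "length xs = n" for xs
    apply (rule reval.comp[where ys="[c]"]) using r that by (auto intro: reval.succ)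
  thus ?case unfolding rf_def by blast
qed

lemma rf_proj: "i < n \<Longrightarrow> rf n (\<lambda>xs. xs ! i)"
  unfolding rf_def by (auto intro!: exI[of _ "Proj i"] reval.proj)

lemma rf_p01: "rf 1 (\<lambda>xs. xs ! 0)" by (rule rf_proj) simp
lemma rf_p02: "rf 2 (\<lambda>xs. xs ! 0)" by (rule rf_proj) simp

lemma rf_succ: "rf 1 (\<lambda>xs. Suc (xs ! 0))"
  unfolding rf_def
proof (intro exI[of _ Succ] allI impI)
  fix xs :: "nat list" assume "length xs = 1"
  then obtain x where "xs = [x]" by (cases xs) auto
  thus "reval Succ xs (Suc (xs ! 0))" by (auto intro: reval.succ)
qed

lemma rf_comp1: "rf 1 h \<Longrightarrow> rf n g \<Longrightarrow> rf n (\<lambda>xs. h [g xs])"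
proof -
  assume "rf 1 h" "rf n g"
  then obtain rh rg where h: "\<forall>xs. length xs = 1 \<longrightarrow> reval rh xs (h xs)"
    and g: "\<forall>xs. length xs = n \<longrightarrow> reval rg xs (g xs)" unfolding rf_def by blast
  have "reval (Comp rh [rg]) xs (h [g xs])" if "length xs = n" for xs
    apply (rule reval.comp[where ys="[g xs]"]) using h g that by auto
  thus ?thesis unfolding rf_def by blast
qed

lemma rf_comp2: "rf 2 h \<Longrightarrow> rf n g1 \<Longrightarrow> rf n g2 \<Longrightarrow> rf n (\<lambda>xs. h [g1 xs, g2 xs])"
proof -
  assume "rf 2 h" "rf n g1" "rf n g2"
  then obtain rh r1 r2 where h: "\<forall>xs. length xs = 2 \<longrightarrow> reval rh xs (h xs)"
    and g1: "\<forall>xs. length xs = n \<longrightarrow> reval r1 xs (g1 xs)"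
    and g2: "\<forall>xs. length xs = n \<longrightarrow> reval r2 xs (g2 xs)" unfolding rf_def by blast
  have "reval (Comp rh [r1, r2]) xs (h [g1 xs, g2 xs])" if "length xs = n" for xs
    apply (rule reval.comp[where ys="[g1 xs, g2 xs]"]) using h g1 g2 that by (auto simp: less_Suc_eq)
  thus ?thesis unfolding rf_def by blast
qed

lemma rf_comp3: "rf 3 h \<Longrightarrow> rf n g1 \<Longrightarrow> rf n g2 \<Longrightarrow> rf n g3 \<Longrightarrow> rf n (\<lambda>xs. h [g1 xs, g2 xs, g3 xs])"
proof -
  assume "rf 3 h" "rf n g1" "rf n g2" "rf n g3"
  then obtain rh r1 r2 r3 where h: "\<forall>xs. length xs = 3 \<longrightarrow> reval rh xs (h xs)"
    and g1: "\<forall>xs. length xs = n \<longrightarrow> reval r1 xs (g1 xs)"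
    and g2: "\<forall>xs. length xs = n \<longrightarrow> reval r2 xs (g2 xs)"
    and g3: "\<forall>xs. length xs = n \<longrightarrow> reval r3 xs (g3 xs)" unfolding rf_def by blast
  have "reval (Comp rh [r1, r2, r3]) xs (h [g1 xs, g2 xs, g3 xs])" if "length xs = n" for xs
    apply (rule reval.comp[where ys="[g1 xs, g2 xs, g3 xs]"]) using h g1 g2 g3 that
    by (auto simp: less_Suc_eq numeral_3_eq_3)
  thus ?thesis unfolding rf_def by blast
qed

primrec prec :: "(nat list \<Rightarrow> nat) \<Rightarrow> (nat list \<Rightarrow> nat) \<Rightarrow> nat \<Rightarrow> nat list \<Rightarrow> nat" where
  "prec f g 0 ys = f ys"
| "prec f g (Suc k) ys = g (k # prec f g k ys # ys)"

lemma rf_prec: "rf n f \<Longrightarrow> rf (Suc (Suc n)) g \<Longrightarrow> rf (Suc n) (\<lambda>xs. prec f g (hd xs) (tl xs))"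
proof -
  assume "rf n f" "rf (Suc (Suc n)) g"
  then obtain r1 r2 where f: "\<forall>xs. length xs = n \<longrightarrow> reval r1 xs (f xs)"
    and g: "\<forall>xs. length xs = Suc (Suc n) \<longrightarrow> reval r2 xs (g xs)" unfolding rf_def by blast
  have *: "reval (Prim r1 r2) (k # ys) (prec f g k ys)" if "length ys = n" for k ys
  proof (induction k)
    case 0 thus ?case using f that by (auto intro: reval.prim0)
  next
    case (Suc k) thus ?case using g that by (auto intro: reval.primS)
  qed
  have "reval (Prim r1 r2) xs (prec f g (hd xs) (tl xs))" if "length xs = Suc n" for xs
    using *[of "tl xs" "hd xs"] that by (cases xs) auto
  thus ?thesis unfolding rf_def by blast
qed

lemma rf_minim: "rf (Suc n) f \<Longrightarrow> (\<And>ys. length ys = n \<Longrightarrow> \<exists>k. f (k # ys) = 0)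
   \<Longrightarrow> rf n (\<lambda>ys. LEAST k. f (k # ys) = 0)"
proof -
  assume "rf (Suc n) f" and ex: "\<And>ys. length ys = n \<Longrightarrow> \<exists>k. f (k # ys) = 0"
  then obtain r where f: "\<forall>xs. length xs = Suc n \<longrightarrow> reval r xs (f xs)" unfolding rf_def by blast
  have "reval (Minim r) ys (LEAST k. f (k # ys) = 0)" if "length ys = n" for ys
  proof (rule reval.minim)
    show "reval r ((LEAST k. f (k # ys) = 0) # ys) 0"
      using f that LeastI_ex[OF ex[OF that]] by (metis length_Cons)
    show "\<forall>m<(LEAST k. f (k # ys) = 0). \<exists>y. reval r (m # ys) y \<and> 0 < y"
    proof (intro allI impI)
      fix m assume "m < (LEAST k. f (k # ys) = 0)"
      hence "f (m # ys) \<noteq> 0" by (rule not_less_Least)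
      moreover have "reval r (m # ys) (f (m # ys))" using f that by simp
      ultimately show "\<exists>y. reval r (m # ys) y \<and> 0 < y" by blast
    qed
  qed
  thus ?thesis unfolding rf_def by blast
qed

lemma len1: "length xs = Suc 0 \<Longrightarrow> \<exists>x. xs = [x]"
  by (cases xs) auto
lemma len2: "length xs = 2 \<Longrightarrow> \<exists>x y. xs = [x, y]"
  by (auto simp: numeral_2_eq_2 length_Suc_conv)
lemma len3: "length xs = 3 \<Longrightarrow> \<exists>x y z. xs = [x, y, z]"
  by (auto simp: numeral_3_eq_3 length_Suc_conv)

lemma rf_add: "rf 2 (\<lambda>xs. xs ! 0 + xs ! 1)"
proof -
  have g: "rf 3 (\<lambda>xs. Suc (xs ! 1))"
    using rf_comp1[OF rf_succ rf_proj[of 1 3]] by simp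
  have "rf (Suc 1) (\<lambda>xs. prec (\<lambda>ys. ys ! 0) (\<lambda>ys. Suc (ys ! 1)) (hd xs) (tl xs))"
    by (rule rf_prec) (use rf_proj[of 0 1] g in \<open>auto simp: numeral_3_eq_3\<close>)
  moreover have "prec (\<lambda>ys. ys ! 0) (\<lambda>ys. Suc (ys ! 1)) k [y] = k + y" for k y
    by (induction k) auto
  ultimately have A: "rf 2 (\<lambda>xs. prec (\<lambda>ys. ys ! 0) (\<lambda>ys. Suc (ys ! 1)) (hd xs) (tl xs))"
    and P: "\<And>k y. prec (\<lambda>ys. ys ! 0) (\<lambda>ys. Suc (ys ! 1)) k [y] = k + y"
    by (auto simp: numeral_2_eq_2)
  show ?thesis
  proof (rule rf_cong[OF A])
    fix xs :: "nat list" assume "length xs = 2"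
    then obtain x y where "xs = [x, y]" using len2 by blast
    thus "prec (\<lambda>ys. ys ! 0) (\<lambda>ys. Suc (ys ! 1)) (hd xs) (tl xs) = xs ! 0 + xs ! 1" using P by simp
  qed
qed

lemma rf_prec_eq: "rf n f \<Longrightarrow> rf (Suc (Suc n)) g \<Longrightarrow> (\<And>k ys. length ys = n \<Longrightarrow> prec f g k ys = h (k # ys))
  \<Longrightarrow> rf (Suc n) h"
  apply (erule rf_cong[OF rf_prec])
   apply assumption
  subgoal for xs by (cases xs) auto
  done

lemma rf_mul: "rf 2 (\<lambda>xs. xs ! 0 * xs ! 1)"
proof -
  have g: "rf 3 (\<lambda>xs. xs ! 1 + xs ! 2)"
    by (rule rf_cong[OF rf_comp2[OF rf_add rf_proj[of 1 3] rf_proj[of 2 3]]]) auto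
  have "rf (Suc 1) (\<lambda>xs. xs ! 0 * xs ! 1)"
  proof (rule rf_prec_eq[OF rf_const[of 1 0]])
    show "rf (Suc (Suc 1)) (\<lambda>xs. xs ! 1 + xs ! 2)" using g by (simp add: numeral_3_eq_3)
    fix k and ys :: "nat list" assume "length ys = 1"
    then obtain y where "ys = [y]" using len1 by fastforce
    thus "prec (\<lambda>_. 0) (\<lambda>xs. xs ! 1 + xs ! 2) k ys = ((k # ys) ! 0 * (k # ys) ! 1)"
      by (induction k) auto
  qed
  thus ?thesis by (simp add: numeral_2_eq_2)
qed

lemma rf_pred: "rf 1 (\<lambda>xs. xs ! 0 - 1)"
proof -
  have "rf (Suc 0) (\<lambda>xs. xs ! 0 - 1)"
  proof (rule rf_prec_eq[OF rf_const[of 0 0]])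
    show "rf (Suc (Suc 0)) (\<lambda>xs. xs ! 0)" using rf_proj[of 0 "Suc (Suc 0)"] by simp
    fix k and ys :: "nat list" assume "length ys = 0"
    thus "prec (\<lambda>_. 0) (\<lambda>xs. xs ! 0) k ys = (k # ys) ! 0 - 1"
      by (cases k) auto
  qed
  thus ?thesis by simp
qed

lemma rf_rsub: "rf 2 (\<lambda>xs. xs ! 1 - xs ! 0)"
proof -
  have g: "rf 3 (\<lambda>xs. xs ! 1 - 1)"
    by (rule rf_cong[OF rf_comp1[OF rf_pred rf_proj[of 1 3]]]) auto
  have "rf (Suc 1) (\<lambda>xs. xs ! 1 - xs ! 0)"
  proof (rule rf_prec_eq[OF rf_p01])
    show "rf (Suc (Suc 1)) (\<lambda>xs. xs ! 1 - 1)" using g by (simp add: numeral_3_eq_3)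
    fix k and ys :: "nat list" assume "length ys = 1"
    then obtain y where "ys = [y]" using len1 by fastforce
    thus "prec (\<lambda>xs. xs ! 0) (\<lambda>xs. xs ! 1 - 1) k ys = (k # ys) ! 1 - (k # ys) ! 0"
      by (induction k) auto
  qed
  thus ?thesis by (simp add: numeral_2_eq_2)
qed

lemma rf_sub: "rf 2 (\<lambda>xs. xs ! 0 - xs ! 1)"
  by (rule rf_cong[OF rf_comp2[OF rf_rsub rf_proj[of 1 2] rf_proj[of 0 2]]]) auto

lemma rf_tri: "rf 1 (\<lambda>xs. triangle (xs ! 0))"
proof -
  have s: "rf 2 (\<lambda>xs. Suc (xs ! 0))"
    by (rule rf_cong[OF rf_comp1[OF rf_succ rf_proj[of 0 2]]]) auto
  have g: "rf 2 (\<lambda>xs. xs ! 1 + Suc (xs ! 0))"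
    by (rule rf_cong[OF rf_comp2[OF rf_add rf_proj[of 1 2] s]]) auto
  have "rf (Suc 0) (\<lambda>xs. triangle (xs ! 0))"
  proof (rule rf_prec_eq[OF rf_const[of 0 0]])
    show "rf (Suc (Suc 0)) (\<lambda>xs. xs ! 1 + Suc (xs ! 0))" using g by (simp add: numeral_2_eq_2)
    fix k and ys :: "nat list" assume "length ys = 0"
    thus "prec (\<lambda>_. 0) (\<lambda>xs. xs ! 1 + Suc (xs ! 0)) k ys = triangle ((k # ys) ! 0)"
      by (induction k) auto
  qed
  thus ?thesis by simp
qed

lemma rf_if: "rf 3 (\<lambda>xs. if xs ! 0 = 0 then xs ! 1 else xs ! 2)"
proof -
  have "rf (Suc 2) (\<lambda>xs. if xs ! 0 = 0 then xs ! 1 else xs ! 2)"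
  proof (rule rf_prec_eq[OF rf_p02])
    show "rf (Suc (Suc 2)) (\<lambda>xs. xs ! 3)" using rf_proj[of 3 4] by simp
    fix k and ys :: "nat list" assume "length ys = 2"
    then obtain a b where "ys = [a, b]" using len2 by blast
    thus "prec (\<lambda>xs. xs ! 0) (\<lambda>xs. xs ! 3) k ys = (if (k # ys) ! 0 = 0 then (k # ys) ! 1 else (k # ys) ! 2)"
      by (cases k) (auto simp: numeral_3_eq_3)
  qed
  thus ?thesis by simp
qed

definition rf1 :: "(nat \<Rightarrow> nat) \<Rightarrow> bool" where
  "rf1 f \<longleftrightarrow> rf 1 (\<lambda>xs. f (xs ! 0))"

lemma rf1_id: "rf1 (\<lambda>x. x)"
  unfolding rf1_def by (rule rf_proj) simp

lemma rf1_const: "rf1 (\<lambda>x. c)"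
  unfolding rf1_def by (rule rf_const)

lemma rf1_comp: "rf1 f \<Longrightarrow> rf1 g \<Longrightarrow> rf1 (\<lambda>x. f (g x))"
  unfolding rf1_def by (rule rf_cong[OF rf_comp1[of "\<lambda>xs. f (xs ! 0)"]]) auto

lemma rf1_Suc: "rf1 f \<Longrightarrow> rf1 (\<lambda>x. Suc (f x))"
  unfolding rf1_def by (rule rf_cong[OF rf_comp1[OF rf_succ]]) auto

lemma rf1_tri: "rf1 f \<Longrightarrow> rf1 (\<lambda>x. triangle (f x))"
  unfolding rf1_def by (rule rf_cong[OF rf_comp1[OF rf_tri]]) auto

lemma rf1_add: "rf1 f \<Longrightarrow> rf1 g \<Longrightarrow> rf1 (\<lambda>x. f x + g x)"
  unfolding rf1_def by (rule rf_cong[OF rf_comp2[OF rf_add]]) auto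

lemma rf1_mul: "rf1 f \<Longrightarrow> rf1 g \<Longrightarrow> rf1 (\<lambda>x. f x * g x)"
  unfolding rf1_def by (rule rf_cong[OF rf_comp2[OF rf_mul]]) auto

lemma rf1_sub: "rf1 f \<Longrightarrow> rf1 g \<Longrightarrow> rf1 (\<lambda>x. f x - g x)"
  unfolding rf1_def by (rule rf_cong[OF rf_comp2[OF rf_sub]]) auto

lemma rf1_if: "rf1 t \<Longrightarrow> rf1 f \<Longrightarrow> rf1 g \<Longrightarrow> rf1 (\<lambda>x. if t x = 0 then f x else g x)"
  unfolding rf1_def by (rule rf_cong[OF rf_comp3[OF rf_if, of 1 "\<lambda>xs. t (xs ! 0)"  "\<lambda>xs. f (xs ! 0)"  "\<lambda>xs. g (xs ! 0)"]]) auto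

lemma rf1_pe: "rf1 f \<Longrightarrow> rf1 g \<Longrightarrow> rf1 (\<lambda>x. prod_encode (f x, g x))"
proof -
  assume "rf1 f" "rf1 g"
  hence "rf1 (\<lambda>x. triangle (f x + g x) + f x)" by (intro rf1_add rf1_tri)
  thus ?thesis by (simp add: prod_encode_def)
qed

lemma triangle_mono: "s \<le> t \<Longrightarrow> triangle s \<le> triangle t"
  by (induction t rule: dec_induct) auto

lemma pd_search: "(LEAST s. e < triangle (Suc s)) = fst (prod_decode e) + snd (prod_decode e)"
proof -
  obtain a b where ab: "prod_decode e = (a, b)" by fastforce
  hence e: "e = triangle (a + b) + a" using prod_decode_inverse[of e] by (simp add: prod_encode_def)
  show ?thesis unfolding ab
  proof (rule Least_equality)
    show "e < triangle (Suc (fst (a, b) + snd (a, b)))" using e by simp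
    fix s assume "e < triangle (Suc s)"
    thus "fst (a, b) + snd (a, b) \<le> s"
      using triangle_mono[of "Suc s" "a + b"] e by (cases "Suc s \<le> a + b") auto
  qed
qed

lemma rf1_search: "rf1 (\<lambda>e. LEAST s. e < triangle (Suc s))"
proof -
  have t: "rf 2 (\<lambda>xs. triangle (Suc (xs ! 0)))"
    by (rule rf_cong[OF rf_comp1[OF rf_tri rf_comp1[OF rf_succ rf_proj[of 0 2]]]]) auto
  have d: "rf 2 (\<lambda>xs. triangle (Suc (xs ! 0)) - xs ! 1)"
    by (rule rf_cong[OF rf_comp2[OF rf_sub t rf_proj[of 1 2]]]) auto
  have f: "rf 2 (\<lambda>xs. 1 - (triangle (Suc (xs ! 0)) - xs ! 1))"
    by (rule rf_cong[OF rf_comp2[OF rf_sub rf_const d]]) auto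
  have M: "rf 1 (\<lambda>ys. LEAST k. 1 - (triangle (Suc ((k # ys) ! 0)) - (k # ys) ! 1) = 0)"
  proof (rule rf_minim)
    show "rf (Suc 1) (\<lambda>xs. 1 - (triangle (Suc (xs ! 0)) - xs ! 1))" using f by (simp add: numeral_2_eq_2)
    fix ys :: "nat list" assume "length ys = 1"
    then obtain y where "ys = [y]" using len1 by fastforce
    moreover have "y < triangle (Suc y)" by (induction y) auto
    ultimately show "\<exists>k. 1 - (triangle (Suc ((k # ys) ! 0)) - (k # ys) ! 1) = 0"
      by (intro exI[of _ y]) simp
  qed
  have E: "(1 - (triangle (Suc k) - y) = 0) \<longleftrightarrow> y < triangle (Suc k)" for k y :: nat
    by auto
  show ?thesis unfolding rf1_def
  proof (rule rf_cong[OF M])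
    fix xs :: "nat list" assume "length xs = 1"
    then obtain x where x: "xs = [x]" using len1 by fastforce
    show "(LEAST k. 1 - (triangle (Suc ((k # xs) ! 0)) - (k # xs) ! 1) = 0) = (LEAST s. xs ! 0 < triangle (Suc s))"
      unfolding x by (simp only: E[unfolded One_nat_def] nth_Cons_0 nth_Cons_Suc One_nat_def)
  qed
qed

lemma rf1_pfst: "rf1 f \<Longrightarrow> rf1 (\<lambda>x. fst (prod_decode (f x)))"
proof -
  assume f: "rf1 f"
  have "fst (prod_decode e) = e - triangle (LEAST s. e < triangle (Suc s))" for e
  proof -
    obtain a b where ab: "prod_decode e = (a, b)" by fastforce
    hence e: "e = triangle (a + b) + a" using prod_decode_inverse[of e] by (simp add: prod_encode_def)
    thus ?thesis using pd_search[of e] ab by simp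
  qed
  moreover have "rf1 (\<lambda>e. e - triangle (LEAST s. e < triangle (Suc s)))"
    by (intro rf1_sub rf1_id rf1_tri rf1_search)
  ultimately have "rf1 (\<lambda>e. fst (prod_decode e))" by simp
  thus ?thesis using f by (rule rf1_comp)
qed

lemma rf1_psnd: "rf1 f \<Longrightarrow> rf1 (\<lambda>x. snd (prod_decode (f x)))"
proof -
  assume f: "rf1 f"
  have "snd (prod_decode e) = (LEAST s. e < triangle (Suc s)) - fst (prod_decode e)" for e
    using pd_search[of e] by simp
  moreover have "rf1 (\<lambda>e. (LEAST s. e < triangle (Suc s)) - fst (prod_decode e))"
    by (intro rf1_sub rf1_id rf1_pfst rf1_search)
  ultimately have "rf1 (\<lambda>e. snd (prod_decode e))" by simp
  thus ?thesis using f by (rule rf1_comp)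
qed

lemma rf1_evconst: "(\<And>c. K \<le> c \<Longrightarrow> f c = d) \<Longrightarrow> rf1 f"
proof (induction K arbitrary: f)
  case 0
  hence "f = (\<lambda>_. d)" by auto
  thus ?case by (simp add: rf1_const)
next
  case (Suc K)
  have "rf1 (\<lambda>c. f (Suc c))" by (rule Suc.IH) (use Suc.prems in auto)
  hence g: "rf 2 (\<lambda>xs. f (Suc (xs ! 0)))" unfolding rf1_def
    by (rule rf_cong[OF rf_comp1[OF _ rf_proj[of 0 2]]]) auto
  have "rf (Suc 0) (\<lambda>xs. f (xs ! 0))"
  proof (rule rf_prec_eq[OF rf_const[of 0 "f 0"]])
    show "rf (Suc (Suc 0)) (\<lambda>xs. f (Suc (xs ! 0)))" using g by (simp add: numeral_2_eq_2)
    fix k and ys :: "nat list" assume "length ys = 0"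
    thus "prec (\<lambda>_. f 0) (\<lambda>xs. f (Suc (xs ! 0))) k ys = f ((k # ys) ! 0)"
      by (cases k) auto
  qed
  thus ?case unfolding rf1_def by simp
qed

lemma rf1_iter: "rf1 init \<Longrightarrow> rf1 step \<Longrightarrow> rf1 (\<lambda>n. (step ^^ n) (init n))"
proof -
  assume i: "rf1 init" and s: "rf1 step"
  have g: "rf 3 (\<lambda>xs. step (xs ! 1))" using s unfolding rf1_def
    by (rule rf_cong[OF rf_comp1[OF _ rf_proj[of 1 3]]]) auto
  have "rf (Suc 1) (\<lambda>xs. (step ^^ (xs ! 0)) (init (xs ! 1)))"
  proof (rule rf_prec_eq[OF i[unfolded rf1_def]])
    show "rf (Suc (Suc 1)) (\<lambda>xs. step (xs ! 1))" using g by (simp add: numeral_3_eq_3)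
    fix k and ys :: "nat list" assume "length ys = 1"
    then obtain y where "ys = [y]" using len1 by fastforce
    thus "prec (\<lambda>xs. init (xs ! 0)) (\<lambda>xs. step (xs ! 1)) k ys = (step ^^ ((k # ys) ! 0)) (init ((k # ys) ! 1))"
      by (induction k) auto
  qed
  hence "rf 2 (\<lambda>xs. (step ^^ (xs ! 0)) (init (xs ! 1)))" by (simp add: numeral_2_eq_2)
  thus ?thesis unfolding rf1_def
    by (rule rf_cong[OF rf_comp2[OF _ rf_proj[of 0 1] rf_proj[of 0 1]]]) auto
qed

lemma rf1_foldr: "(\<And>q. q \<in> set Rl \<Longrightarrow> rf1 (E q)) \<Longrightarrow> rf1 b
   \<Longrightarrow> rf1 (\<lambda>x. foldr (\<lambda>q acc. Suc (prod_encode (E q x, acc))) Rl (b x))"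
proof (induction Rl)
  case Nil thus ?case by simp
next
  case (Cons a Rl)
  have "rf1 (\<lambda>x. Suc (prod_encode (E a x, foldr (\<lambda>q acc. Suc (prod_encode (E q x, acc))) Rl (b x))))"
    by (rule rf1_Suc, rule rf1_pe) (use Cons in auto)
  thus ?case by simp
qed

lemma rf1_computable: "rf1 f \<Longrightarrow> computable f"
proof -
  assume "rf1 f"
  then obtain r where r: "\<forall>xs. length xs = 1 \<longrightarrow> reval r xs (f (xs ! 0))" unfolding rf1_def rf_def by blast
  have "reval r [n] (f n)" for n using r[rule_format, of "[n]"] by simp
  thus ?thesis unfolding computable_def by blast
qed

definition ecode :: "nat \<Rightarrow> (nat \<Rightarrow> nat \<Rightarrow> nat) \<Rightarrow> (nat \<Rightarrow> nat \<Rightarrow> nat) \<Rightarrow> nat \<Rightarrow> nat \<Rightarrow> nat" where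
  "ecode N Qn C q x = prod_encode (fst (prod_decode x) * N + q,
     prod_encode (fst (prod_decode (snd (prod_decode x))) * N + Qn q (snd (prod_decode (snd (prod_decode x)))),
                  C q (snd (prod_decode (snd (prod_decode x))))))"

definition rstep :: "nat \<Rightarrow> (nat \<Rightarrow> nat \<Rightarrow> nat) \<Rightarrow> (nat \<Rightarrow> nat \<Rightarrow> nat) \<Rightarrow> nat list \<Rightarrow> nat \<Rightarrow> nat" where
  "rstep N Qn C Rl st = (if fst (prod_decode st) = 0 then st else
     prod_encode (snd (prod_decode (fst (prod_decode st) - 1)),
       foldr (\<lambda>q acc. Suc (prod_encode (ecode N Qn C q (fst (prod_decode (fst (prod_decode st) - 1))), acc)))
         Rl (snd (prod_decode st))))"

definition redF :: "nat \<Rightarrow> (nat \<Rightarrow> nat \<Rightarrow> nat) \<Rightarrow> (nat \<Rightarrow> nat \<Rightarrow> nat) \<Rightarrow> nat list \<Rightarrow> nat \<Rightarrow> nat" where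
  "redF N Qn C Rl n = snd (prod_decode ((rstep N Qn C Rl ^^ n) (prod_encode (n, 0))))"

lemma rf1_ecode:
  assumes "\<And>c. K \<le> c \<Longrightarrow> Qn q c = d1" and "\<And>c. K \<le> c \<Longrightarrow> C q c = d2"
  shows "rf1 (ecode N Qn C q)"
proof -
  have A: "rf1 (\<lambda>x. fst (prod_decode x))" by (intro rf1_pfst rf1_id)
  have A': "rf1 (\<lambda>x. fst (prod_decode (snd (prod_decode x))))" by (intro rf1_pfst rf1_psnd rf1_id)
  have B: "rf1 (\<lambda>x. snd (prod_decode (snd (prod_decode x))))" by (intro rf1_psnd rf1_id)
  have Q: "rf1 (\<lambda>x. Qn q (snd (prod_decode (snd (prod_decode x)))))"
    by (rule rf1_comp[OF rf1_evconst[OF assms(1)] B])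
  have CC: "rf1 (\<lambda>x. C q (snd (prod_decode (snd (prod_decode x)))))"
    by (rule rf1_comp[OF rf1_evconst[OF assms(2)] B])
  show ?thesis unfolding ecode_def
    by (intro rf1_pe rf1_add rf1_mul A A' Q CC rf1_const)
qed

lemma rf1_redF:
  assumes "\<And>q. \<exists>K d1 d2. \<forall>c. K \<le> c \<longrightarrow> Qn q c = d1 \<and> C q c = d2"
  shows "rf1 (redF N Qn C Rl)"
proof -
  have E: "rf1 (ecode N Qn C q)" for q
  proof -
    obtain K d1 d2 where "\<forall>c. K \<le> c \<longrightarrow> Qn q c = d1 \<and> C q c = d2" using assms by blast
    thus ?thesis by (intro rf1_ecode[of K Qn q d1 C d2]) auto
  qed
  have H: "rf1 (\<lambda>st. fst (prod_decode (fst (prod_decode st) - 1)))"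
    by (intro rf1_pfst rf1_sub rf1_id rf1_const)
  have E2: "rf1 (\<lambda>st. ecode N Qn C q (fst (prod_decode (fst (prod_decode st) - 1))))" for q
    by (rule rf1_comp[OF E H])
  have S: "rf1 (rstep N Qn C Rl)" unfolding rstep_def
    apply (rule rf1_if)
      apply (intro rf1_pfst rf1_id)
     apply (rule rf1_id)
    apply (rule rf1_pe)
     apply (intro rf1_psnd rf1_sub rf1_pfst rf1_id rf1_const)
    apply (rule rf1_foldr[OF E2])
    apply (intro rf1_psnd rf1_id)
    done
  have I: "rf1 (\<lambda>n. prod_encode (n, 0))" by (intro rf1_pe rf1_id rf1_const)
  show ?thesis unfolding redF_def[abs_def]
    by (rule rf1_psnd[OF rf1_iter[OF I S]])
qed

lemma foldr_code: "foldr (\<lambda>q acc. Suc (prod_encode (E q, acc))) Rl (list_encode out) = list_encode (map E Rl @ out)"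
  by (induction Rl) auto

lemma rstep_nil: "rstep N Qn C Rl (prod_encode (0, y)) = prod_encode (0, y)"
  unfolding rstep_def by simp

lemma rstep_cons: "rstep N Qn C Rl (prod_encode (list_encode (x # xs), list_encode out))
   = prod_encode (list_encode xs, list_encode (map (\<lambda>q. ecode N Qn C q x) Rl @ out))"
  unfolding rstep_def by (simp add: foldr_code)

lemma rstep_pow_nil: "(rstep N Qn C Rl ^^ j) (prod_encode (0, y)) = prod_encode (0, y)"
  by (induction j) (auto simp: rstep_nil)

lemma rstep_iter: "length xs \<le> j \<Longrightarrow> \<exists>Os. (rstep N Qn C Rl ^^ j) (prod_encode (list_encode xs, list_encode out))
    = prod_encode (0, list_encode Os) \<and> set Os = set out \<union> {ecode N Qn C q x | x q. x \<in> set xs \<and> q \<in> set Rl}"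
proof (induction xs arbitrary: j out)
  case Nil thus ?case using rstep_pow_nil by (simp add: exI[of _ out])
next
  case (Cons x xs)
  then obtain j' where j: "j = Suc j'" "length xs \<le> j'" by (cases j) auto
  obtain Os where Os: "(rstep N Qn C Rl ^^ j') (prod_encode (list_encode xs, list_encode (map (\<lambda>q. ecode N Qn C q x) Rl @ out)))
    = prod_encode (0, list_encode Os)" "set Os = set (map (\<lambda>q. ecode N Qn C q x) Rl @ out) \<union> {ecode N Qn C q y | y q. y \<in> set xs \<and> q \<in> set Rl}"
    using Cons.IH[OF j(2)] by blast
  have "(rstep N Qn C Rl ^^ j) (prod_encode (list_encode (x # xs), list_encode out)) = prod_encode (0, list_encode Os)"
    unfolding j funpow_Suc_right o_def rstep_cons using Os(1) .
  moreover have "set Os = set out \<union> {ecode N Qn C q y | y q. y \<in> set (x # xs) \<and> q \<in> set Rl}"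
    using Os(2) by auto
  ultimately show ?case by blast
qed

lemma length_le_list_encode: "length xs \<le> list_encode xs"
proof (induction xs)
  case (Cons x xs) thus ?case using le_prod_encode_2[of "list_encode xs" x] by simp
qed simp

lemma set_redF: "set (list_decode (redF N Qn C Rl n)) = {ecode N Qn C q x | x q. x \<in> set (list_decode n) \<and> q \<in> set Rl}"
proof -
  have "length (list_decode n) \<le> n" using length_le_list_encode[of "list_decode n"] by simp
  then obtain Os where Os: "(rstep N Qn C Rl ^^ n) (prod_encode (list_encode (list_decode n), list_encode []))
    = prod_encode (0, list_encode Os)" "set Os = set [] \<union> {ecode N Qn C q x | x q. x \<in> set (list_decode n) \<and> q \<in> set Rl}"
    using rstep_iter by blast
  have "redF N Qn C Rl n = list_encode Os" unfolding redF_def using Os(1) by simp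
  thus ?thesis using Os(2) by simp
qed

lemma tedges_redF: "t \<in> set (tedges (redF N Qn C Rl n)) \<longleftrightarrow>
  (\<exists>a a' c q. (a, a', c) \<in> set (tedges n) \<and> q \<in> set Rl \<and> t = (a * N + q, a' * N + Qn q c, C q c))"
proof
  assume "t \<in> set (tedges (redF N Qn C Rl n))"
  then obtain e where e: "e \<in> set (list_decode (redF N Qn C Rl n))" "t = (fst (prod_decode e), prod_decode (snd (prod_decode e)))"
    unfolding tedges_def by auto
  then obtain x q where xq: "x \<in> set (list_decode n)" "q \<in> set Rl" "e = ecode N Qn C q x" using set_redF by blast
  obtain a r where ar: "prod_decode x = (a, r)" by fastforce
  obtain a' c where ac: "prod_decode r = (a', c)" by fastforce
  have "(a, a', c) \<in> set (tedges n)" unfolding tedges_def using xq(1) ar ac by force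
  moreover have "t = (a * N + q, a' * N + Qn q c, C q c)" using e(2) xq(3) ar ac by (simp add: ecode_def)
  ultimately show "\<exists>a a' c q. (a, a', c) \<in> set (tedges n) \<and> q \<in> set Rl \<and> t = (a * N + q, a' * N + Qn q c, C q c)"
    using xq(2) by blast
next
  assume "\<exists>a a' c q. (a, a', c) \<in> set (tedges n) \<and> q \<in> set Rl \<and> t = (a * N + q, a' * N + Qn q c, C q c)"
  then obtain a a' c q where h: "(a, a', c) \<in> set (tedges n)" "q \<in> set Rl" "t = (a * N + q, a' * N + Qn q c, C q c)" by blast
  then obtain x where x: "x \<in> set (list_decode n)" "(a, a', c) = (fst (prod_decode x), prod_decode (snd (prod_decode x)))"
    unfolding tedges_def by auto
  have "ecode N Qn C q x \<in> set (list_decode (redF N Qn C Rl n))" using set_redF x(1) h(2) by blast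
  moreover have "t = (fst (prod_decode (ecode N Qn C q x)), prod_decode (snd (prod_decode (ecode N Qn C q x))))"
    using h(3) x(2) by (simp add: ecode_def) (metis fst_conv snd_conv)
  ultimately show "t \<in> set (tedges (redF N Qn C Rl n))" unfolding tedges_def by auto
qed

definition gprod :: "('g, 'a) monoid_scheme \<Rightarrow> 'g list \<Rightarrow> 'g" where
  "gprod M xs = foldr (\<lambda>x y. x \<otimes>\<^bsub>M\<^esub> y) xs \<one>\<^bsub>M\<^esub>"

lemma gprod_Nil [simp]: "gprod M [] = \<one>\<^bsub>M\<^esub>" and gprod_Cons [simp]: "gprod M (x # xs) = x \<otimes>\<^bsub>M\<^esub> gprod M xs"
  by (auto simp: gprod_def)

lemma (in monoid) gprod_carrier: "set xs \<subseteq> carrier G \<Longrightarrow> gprod G xs \<in> carrier G"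
  by (induction xs) auto

lemma (in monoid) gprod_append: "set xs \<subseteq> carrier G \<Longrightarrow> set ys \<subseteq> carrier G \<Longrightarrow> gprod G (xs @ ys) = gprod G xs \<otimes> gprod G ys"
  by (induction xs) (auto simp: gprod_carrier m_assoc)

lemma word_val_gprod: "word_val G S w = gprod G (map (lval G S) w)"
  by (induction w) (auto simp: word_val_def)

lemma lval_carrier: "group G \<Longrightarrow> set S \<subseteq> carrier G \<Longrightarrow> fst l < length S \<Longrightarrow> lval G S l \<in> carrier G"
  unfolding lval_def by (auto intro!: group.inv_closed nth_mem)

lemma word_val_carrier: "group G \<Longrightarrow> set S \<subseteq> carrier G \<Longrightarrow> w \<in> words (length S) \<Longrightarrow> word_val G S w \<in> carrier G"
  unfolding word_val_gprod words_def
  by (rule monoid.gprod_carrier) (auto intro: lval_carrier group.is_monoid)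

lemma word_val_append: "group G \<Longrightarrow> set S \<subseteq> carrier G \<Longrightarrow> xs \<in> words (length S) \<Longrightarrow> ys \<in> words (length S)
  \<Longrightarrow> word_val G S (xs @ ys) = word_val G S xs \<otimes>\<^bsub>G\<^esub> word_val G S ys"
  unfolding word_val_gprod words_def
  by (simp, rule monoid.gprod_append) (auto intro: lval_carrier group.is_monoid)

lemma (in monoid) path_gprod:
  fixes i :: "'i::semiring_1"
  assumes "\<omega> i \<in> carrier G" "\<forall>t<n. v (i + of_nat t) \<in> carrier G"
    "\<forall>t<n. \<omega> (i + of_nat t + 1) = \<omega> (i + of_nat t) \<otimes> v (i + of_nat t)"
  shows "\<omega> (i + of_nat n) = \<omega> i \<otimes> gprod G (map (\<lambda>t. v (i + of_nat t)) [0..<n])"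
  using assms
proof (induction n)
  case 0 thus ?case by simp
next
  case (Suc n)
  have c: "set (map (\<lambda>t. v (i + of_nat t)) [0..<n]) \<subseteq> carrier G" using Suc.prems by auto
  have "\<omega> (i + of_nat (Suc n)) = \<omega> (i + of_nat n + 1)" by (simp add: ac_simps)
  also have "\<dots> = (\<omega> i \<otimes> gprod G (map (\<lambda>t. v (i + of_nat t)) [0..<n])) \<otimes> v (i + of_nat n)"
    using Suc by simp
  also have "\<dots> = \<omega> i \<otimes> (gprod G (map (\<lambda>t. v (i + of_nat t)) [0..<n]) \<otimes> gprod G [v (i + of_nat n)])"
    using Suc.prems c by (simp add: m_assoc gprod_carrier)
  also have "\<dots> = \<omega> i \<otimes> gprod G (map (\<lambda>t. v (i + of_nat t)) [0..<Suc n])"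
    using Suc.prems c by (simp add: gprod_append)
  finally show ?case .
qed

lemma (in group) path_eq_iff:
  fixes i :: "'i::semiring_1"
  assumes "\<omega> i \<in> carrier G" "\<forall>t<n. v (i + of_nat t) \<in> carrier G"
    "\<forall>t<n. \<omega> (i + of_nat t + 1) = \<omega> (i + of_nat t) \<otimes> v (i + of_nat t)"
  shows "\<omega> (i + of_nat n) = \<omega> i \<longleftrightarrow> gprod G (map (\<lambda>t. v (i + of_nat t)) [0..<n]) = \<one>"
proof -
  have c: "gprod G (map (\<lambda>t. v (i + of_nat t)) [0..<n]) \<in> carrier G"
    using assms(2) by (intro gprod_carrier) auto
  show ?thesis using path_gprod[OF assms] c assms(1) by simp
qed

fun drun :: "nat set \<Rightarrow> (nat \<Rightarrow> nat \<Rightarrow> nat) \<Rightarrow> nat \<Rightarrow> (nat \<times> bool) list \<Rightarrow> nat" where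
  "drun Q \<delta> q [] = q"
| "drun Q \<delta> q (l # w) = drun Q \<delta> (dstep Q \<delta> q l) w"

lemma frun_append: "frun Q \<delta> \<eta> q (u @ w) = frun Q \<delta> \<eta> q u @ frun Q \<delta> \<eta> (drun Q \<delta> q u) w"
  by (induction u arbitrary: q) auto

lemma drun_append: "drun Q \<delta> q (u @ w) = drun Q \<delta> (drun Q \<delta> q u) w"
  by (induction u arbitrary: q) auto

lemma frun_path:
  fixes i :: "'i::semiring_1"
  assumes "\<forall>t<n. st (i + of_nat t + 1) = dstep Q \<delta> (st (i + of_nat t)) (L (i + of_nat t))"
  shows "frun Q \<delta> \<eta> (st i) (map (\<lambda>t. L (i + of_nat t)) [0..<n]) = map (\<lambda>t. estep Q \<delta> \<eta> (st (i + of_nat t)) (L (i + of_nat t))) [0..<n]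
     \<and> drun Q \<delta> (st i) (map (\<lambda>t. L (i + of_nat t)) [0..<n]) = st (i + of_nat n)"
  using assms
proof (induction n)
  case 0 thus ?case by simp
next
  case (Suc n)
  have "st (i + of_nat (Suc n)) = st (i + of_nat n + 1)" by (simp add: ac_simps)
  thus ?case using Suc by (simp add: frun_append drun_append)
qed

definition linv :: "nat \<times> bool \<Rightarrow> nat \<times> bool" where
  "linv l = (fst l, \<not> snd l)"

definition lcode :: "nat \<times> bool \<Rightarrow> nat" where
  "lcode l = 2 * fst l + (if snd l then 0 else 1)"

lemma code_letter_lcode [simp]: "code_letter (lcode l) = l"
  unfolding code_letter_def lcode_def by (cases l) auto

lemma lcode_inj: "lcode l1 = lcode l2 \<Longrightarrow> l1 = l2"
  by (metis code_letter_lcode)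

lemma code_letter_inj: "code_letter c1 = code_letter c2 \<Longrightarrow> c1 = c2"
  unfolding code_letter_def by simp presburger

lemma lcode_linv: "lcode (linv l) = flip_code (lcode l)"
  unfolding lcode_def linv_def flip_code_def by auto

lemma code_letter_flip: "code_letter (flip_code c) = linv (code_letter c)"
  unfolding code_letter_def linv_def flip_code_def by (auto elim: oddE)

lemma lcode_less: "lcode l < 2 * m \<longleftrightarrow> fst l < m"
  unfolding lcode_def by auto

lemma code_letter_less: "fst (code_letter c) < k \<longleftrightarrow> c < 2 * k"
  unfolding code_letter_def by auto

lemma flip_less: "c < 2 * k \<Longrightarrow> flip_code c < 2 * k"
  unfolding flip_code_def by auto

locale snk =
  fixes G :: "('g, 'a) monoid_scheme" and S :: "'g list"
    and H :: "('h, 'b) monoid_scheme" and T :: "'h list"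
    and Q :: "nat set" and q0 :: nat and \<delta> :: "nat \<Rightarrow> nat \<Rightarrow> nat" and \<eta> :: "nat \<Rightarrow> nat \<Rightarrow> nat"
  assumes grpG: "group G" and grpH: "group H" and distS: "distinct S"
    and SG: "set S \<subseteq> carrier G" and TH: "set T \<subseteq> carrier H"
    and irt: "is_irt (length S) (length T) Q q0 \<delta> \<eta>"
    and emb: "\<forall>w \<in> words (length S). \<forall>w' \<in> words (length S).
          word_val H T (frun Q \<delta> \<eta> q0 w) = word_val H T (frun Q \<delta> \<eta> q0 w')
          \<longleftrightarrow> word_val G S w = word_val G S w'"
begin

lemma finQ: "finite Q" and q0Q: "q0 \<in> Q"
  and delta_Q: "\<And>q s. q \<in> Q \<Longrightarrow> s < length S \<Longrightarrow> \<delta> q s \<in> Q"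
  and eta_T: "\<And>q s. q \<in> Q \<Longrightarrow> s < length S \<Longrightarrow> \<eta> q s < length T"
  and ex1: "\<And>q s. q \<in> Q \<Longrightarrow> s < length S \<Longrightarrow> \<exists>!q'. q' \<in> Q \<and> \<delta> q' s = q"
  using irt unfolding is_irt_def by auto

lemma dpred_prop: "q \<in> Q \<Longrightarrow> s < length S \<Longrightarrow> dpred Q \<delta> q s \<in> Q \<and> \<delta> (dpred Q \<delta> q s) s = q"
  unfolding dpred_def using theI'[OF ex1] by blast

lemma dpred_delta: "q \<in> Q \<Longrightarrow> s < length S \<Longrightarrow> dpred Q \<delta> (\<delta> q s) s = q"
proof -
  assume a: "q \<in> Q" "s < length S"
  have e: "\<exists>!q'. q' \<in> Q \<and> \<delta> q' s = \<delta> q s" using ex1[OF delta_Q[OF a] a(2)] .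
  show ?thesis unfolding dpred_def by (rule the1_equality[OF e]) (use a in auto)
qed

lemma dstep_Q: "q \<in> Q \<Longrightarrow> fst l < length S \<Longrightarrow> dstep Q \<delta> q l \<in> Q"
  unfolding dstep_def using dpred_prop delta_Q by auto

lemma dstep_inv: "q \<in> Q \<Longrightarrow> fst l < length S \<Longrightarrow> dstep Q \<delta> (dstep Q \<delta> q l) (linv l) = q"
  unfolding dstep_def linv_def using dpred_prop dpred_delta by auto

lemma estep_inv: "q \<in> Q \<Longrightarrow> fst l < length S \<Longrightarrow> estep Q \<delta> \<eta> (dstep Q \<delta> q l) (linv l) = linv (estep Q \<delta> \<eta> q l)"
  unfolding dstep_def linv_def estep_def using dpred_prop dpred_delta by auto

lemma estep_fst: "q \<in> Q \<Longrightarrow> fst l < length S \<Longrightarrow> fst (estep Q \<delta> \<eta> q l) < length T"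
  unfolding estep_def using dpred_prop eta_T by auto

lemma estep_snd: "snd (estep Q \<delta> \<eta> q l) = snd l"
  unfolding estep_def by auto

lemma drun_Q: "q \<in> Q \<Longrightarrow> w \<in> words (length S) \<Longrightarrow> drun Q \<delta> q w \<in> Q"
  by (induction w arbitrary: q) (auto simp: words_def dstep_Q)

lemma frun_words: "q \<in> Q \<Longrightarrow> w \<in> words (length S) \<Longrightarrow> frun Q \<delta> \<eta> q w \<in> words (length T)"
proof (induction w arbitrary: q)
  case Nil thus ?case by (simp add: words_def)
next
  case (Cons l w)
  hence "dstep Q \<delta> q l \<in> Q" "fst (estep Q \<delta> \<eta> q l) < length T" "w \<in> words (length S)"
    using dstep_Q estep_fst by (auto simp: words_def)
  with Cons.IH[of "dstep Q \<delta> q l"] show ?case by (auto simp: words_def)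
qed

lemma words_append: "u \<in> words k \<Longrightarrow> w \<in> words k \<Longrightarrow> u @ w \<in> words k"
  unfolding words_def by auto

definition Rs :: "nat set" where
  "Rs = {drun Q \<delta> q0 u | u. u \<in> words (length S)}"

lemma Rs_Q: "q \<in> Rs \<Longrightarrow> q \<in> Q"
  unfolding Rs_def using drun_Q q0Q by auto

lemma q0_Rs: "q0 \<in> Rs"
  unfolding Rs_def by (auto intro!: exI[of _ "[]"] simp: words_def)

lemma Rs_dstep: "q \<in> Rs \<Longrightarrow> fst l < length S \<Longrightarrow> dstep Q \<delta> q l \<in> Rs"
proof -
  assume "q \<in> Rs" "fst l < length S"
  then obtain u where u: "u \<in> words (length S)" "q = drun Q \<delta> q0 u" unfolding Rs_def by auto
  have "dstep Q \<delta> q l = drun Q \<delta> q0 (u @ [l])" using u by (simp add: drun_append)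
  moreover have "u @ [l] \<in> words (length S)" using u \<open>fst l < length S\<close> by (auto simp: words_def)
  ultimately show ?thesis unfolding Rs_def by blast
qed

lemma finite_Rs: "finite Rs"
  using finQ Rs_Q by (meson finite_subset subsetI)

lemma key:
  assumes q: "q \<in> Rs" and w: "w \<in> words (length S)"
  shows "word_val H T (frun Q \<delta> \<eta> q w) = \<one>\<^bsub>H\<^esub> \<longleftrightarrow> word_val G S w = \<one>\<^bsub>G\<^esub>"
proof -
  obtain u where u: "u \<in> words (length S)" "q = drun Q \<delta> q0 u" using q unfolding Rs_def by auto
  have qQ: "q \<in> Q" using q Rs_Q by auto
  have uw: "u @ w \<in> words (length S)" using u w words_append by auto
  have fu: "frun Q \<delta> \<eta> q0 u \<in> words (length T)" using frun_words q0Q u by auto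
  have fw: "frun Q \<delta> \<eta> q w \<in> words (length T)" using frun_words qQ w by auto
  have "word_val H T (frun Q \<delta> \<eta> q0 (u @ w)) = word_val H T (frun Q \<delta> \<eta> q0 u) \<otimes>\<^bsub>H\<^esub> word_val H T (frun Q \<delta> \<eta> q w)"
    unfolding frun_append u(2)[symmetric] using word_val_append[OF grpH TH fu fw] .
  moreover have "word_val G S (u @ w) = word_val G S u \<otimes>\<^bsub>G\<^esub> word_val G S w"
    using word_val_append[OF grpG SG u(1) w] .
  moreover have "word_val H T (frun Q \<delta> \<eta> q0 (u @ w)) = word_val H T (frun Q \<delta> \<eta> q0 u) \<longleftrightarrow> word_val G S (u @ w) = word_val G S u"
    using emb uw u(1) by blast
  ultimately show ?thesis
    using group.l_cancel_one[OF grpH] group.l_cancel_one[OF grpG]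
      word_val_carrier[OF grpH TH fu] word_val_carrier[OF grpH TH fw]
      word_val_carrier[OF grpG SG u(1)] word_val_carrier[OF grpG SG w] by simp
qed

lemma estep_inj:
  assumes q: "q \<in> Rs" and l1: "fst l1 < length S" and l2: "fst l2 < length S"
    and eq: "estep Q \<delta> \<eta> q l1 = estep Q \<delta> \<eta> q l2"
  shows "l1 = l2"
proof -
  obtain u where u: "u \<in> words (length S)" "q = drun Q \<delta> q0 u" using q unfolding Rs_def by auto
  have w1: "u @ [l1] \<in> words (length S)" and w2: "u @ [l2] \<in> words (length S)"
    using u l1 l2 by (auto simp: words_def)
  have "frun Q \<delta> \<eta> q0 (u @ [l1]) = frun Q \<delta> \<eta> q0 (u @ [l2])"
    unfolding frun_append using eq u(2) by simp
  hence "word_val G S (u @ [l1]) = word_val G S (u @ [l2])" using emb w1 w2 by metis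
  moreover have "[l1] \<in> words (length S)" "[l2] \<in> words (length S)" using l1 l2 by (auto simp: words_def)
  ultimately have "word_val G S u \<otimes>\<^bsub>G\<^esub> word_val G S [l1] = word_val G S u \<otimes>\<^bsub>G\<^esub> word_val G S [l2]"
    using word_val_append[OF grpG SG u(1)] by metis
  moreover have "word_val G S u \<in> Units G" using word_val_carrier[OF grpG SG u(1)] group.Units_eq[OF grpG] by simp
  ultimately have "word_val G S [l1] = word_val G S [l2]"
    using monoid.Units_l_cancel[OF group.is_monoid[OF grpG]] word_val_carrier[OF grpG SG] \<open>[l1] \<in> _\<close> \<open>[l2] \<in> _\<close>
    by metis
  hence lv: "lval G S l1 = lval G S l2"
    using lval_carrier[OF grpG SG l1] lval_carrier[OF grpG SG l2] grpG
    by (simp add: word_val_def group.is_monoid monoid.r_one)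
  have sn: "snd l1 = snd l2" using eq estep_snd by metis
  have "S ! fst l1 = S ! fst l2"
  proof (cases "snd l1")
    case True thus ?thesis using lv sn unfolding lval_def by simp
  next
    case False
    hence "inv\<^bsub>G\<^esub> (S ! fst l1) = inv\<^bsub>G\<^esub> (S ! fst l2)" using lv sn unfolding lval_def by simp
    thus ?thesis using group.inv_inj[OF grpG] l1 l2 SG by (meson inj_onD nth_mem subsetD)
  qed
  hence "fst l1 = fst l2" using distS l1 l2 nth_eq_iff_index_eq by blast
  thus ?thesis using sn by (simp add: prod_eq_iff)
qed

lemma transfer:
  fixes i :: "'i::semiring_1"
  assumes st: "\<forall>t<n. st (i + of_nat t) \<in> Rs" "st i \<in> Rs"
    and L: "\<forall>t<n. fst (L (i + of_nat t)) < length S"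
    and stp: "\<forall>t<n. st (i + of_nat t + 1) = dstep Q \<delta> (st (i + of_nat t)) (L (i + of_nat t))"
    and w: "\<omega> i \<in> carrier G" "\<forall>t<n. \<omega> (i + of_nat t + 1) = \<omega> (i + of_nat t) \<otimes>\<^bsub>G\<^esub> lval G S (L (i + of_nat t))"
    and w': "\<omega>' i \<in> carrier H" "\<forall>t<n. \<omega>' (i + of_nat t + 1) = \<omega>' (i + of_nat t) \<otimes>\<^bsub>H\<^esub> lval H T (estep Q \<delta> \<eta> (st (i + of_nat t)) (L (i + of_nat t)))"
  shows "\<omega> (i + of_nat n) = \<omega> i \<longleftrightarrow> \<omega>' (i + of_nat n) = \<omega>' i"
proof -
  let ?W = "map (\<lambda>t. L (i + of_nat t)) [0..<n]"
  have W: "?W \<in> words (length S)" using L by (auto simp: words_def)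
  have cG: "\<forall>t<n. lval G S (L (i + of_nat t)) \<in> carrier G" using L lval_carrier[OF grpG SG] by auto
  have cH: "\<forall>t<n. lval H T (estep Q \<delta> \<eta> (st (i + of_nat t)) (L (i + of_nat t))) \<in> carrier H"
    using L st(1) lval_carrier[OF grpH TH] estep_fst Rs_Q by auto
  have "\<omega> (i + of_nat n) = \<omega> i \<longleftrightarrow> gprod G (map (\<lambda>t. lval G S (L (i + of_nat t))) [0..<n]) = \<one>\<^bsub>G\<^esub>"
    by (rule group.path_eq_iff[OF grpG w(1) cG w(2)])
  also have "gprod G (map (\<lambda>t. lval G S (L (i + of_nat t))) [0..<n]) = word_val G S ?W"
    by (simp add: word_val_gprod comp_def)
  also have "word_val G S ?W = \<one>\<^bsub>G\<^esub> \<longleftrightarrow> word_val H T (frun Q \<delta> \<eta> (st i) ?W) = \<one>\<^bsub>H\<^esub>"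
    using key[OF st(2) W] by simp
  also have "word_val H T (frun Q \<delta> \<eta> (st i) ?W) = gprod H (map (\<lambda>t. lval H T (estep Q \<delta> \<eta> (st (i + of_nat t)) (L (i + of_nat t)))) [0..<n])"
    using frun_path[OF stp, of \<eta>] by (simp add: word_val_gprod comp_def)
  also have "\<dots> = \<one>\<^bsub>H\<^esub> \<longleftrightarrow> \<omega>' (i + of_nat n) = \<omega>' i"
    by (rule group.path_eq_iff[OF grpH w'(1) cH w'(2), symmetric])
  finally show ?thesis .
qed

end

lemma inj_int_iff: "inj (\<omega> :: int \<Rightarrow> 'x) \<longleftrightarrow> (\<forall>i. \<forall>n::nat. 0 < n \<longrightarrow> \<omega> (i + of_nat n) \<noteq> \<omega> i)"
proof
  assume "inj \<omega>" thus "\<forall>i. \<forall>n::nat. 0 < n \<longrightarrow> \<omega> (i + of_nat n) \<noteq> \<omega> i" by (auto dest: injD)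
next
  assume h: "\<forall>i. \<forall>n::nat. 0 < n \<longrightarrow> \<omega> (i + of_nat n) \<noteq> \<omega> i"
  show "inj \<omega>"
  proof (rule injI)
    fix x y assume e: "\<omega> x = \<omega> y"
    show "x = y"
    proof (rule ccontr)
      assume "x \<noteq> y"
      hence "x < y \<or> y < x" by auto
      thus False
      proof
        assume "x < y"
        hence y: "y = x + of_nat (nat (y - x))" and p: "0 < nat (y - x)" by auto
        have "\<omega> (x + of_nat (nat (y - x))) \<noteq> \<omega> x" using h p by blast
        thus False using e y by simp
      next
        assume "y < x"
        hence y: "x = y + of_nat (nat (x - y))" and p: "0 < nat (x - y)" by auto
        have "\<omega> (y + of_nat (nat (x - y))) \<noteq> \<omega> y" using h p by blast
        thus False using e y by simp
      qed
    qed
  qed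
qed

lemma inj_on_nat_iff: "inj_on (\<omega> :: nat \<Rightarrow> 'x) {..<N} \<longleftrightarrow> (\<forall>i n. 0 < n \<longrightarrow> i + n < N \<longrightarrow> \<omega> (i + n) \<noteq> \<omega> i)"
proof
  assume "inj_on \<omega> {..<N}" thus "\<forall>i n. 0 < n \<longrightarrow> i + n < N \<longrightarrow> \<omega> (i + n) \<noteq> \<omega> i"
    by (auto dest: inj_onD)
next
  assume h: "\<forall>i n. 0 < n \<longrightarrow> i + n < N \<longrightarrow> \<omega> (i + n) \<noteq> \<omega> i"
  show "inj_on \<omega> {..<N}"
  proof (rule inj_onI)
    fix x y assume xy: "x \<in> {..<N}" "y \<in> {..<N}" and e: "\<omega> x = \<omega> y"
    show "x = y"
    proof (rule ccontr)
      assume "x \<noteq> y"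
      hence "x < y \<or> y < x" by auto
      thus False
      proof
        assume "x < y"
        hence y: "y = x + (y - x)" and p: "0 < y - x" by auto
        have "\<omega> (x + (y - x)) \<noteq> \<omega> x" using h[rule_format, of "y - x" x] p xy y by simp
        thus False using e y by simp
      next
        assume "y < x"
        hence y: "x = y + (x - y)" and p: "0 < x - y" by auto
        have "\<omega> (y + (x - y)) \<noteq> \<omega> y" using h[rule_format, of "x - y" y] p xy y by simp
        thus False using e y by simp
      qed
    qed
  qed
qed

lemma (in group) int_path:
  assumes "\<forall>i. v i \<in> carrier G"
  shows "\<exists>\<omega>. (\<forall>i. \<omega> i \<in> carrier G) \<and> (\<forall>i::int. \<omega> (i + 1) = \<omega> i \<otimes> v i)"
proof -
  define P where "P = rec_nat \<one> (\<lambda>n p. p \<otimes> v (int n))"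
  define M where "M = rec_nat \<one> (\<lambda>n m. v (- int n - 1) \<otimes> m)"
  have P0: "P 0 = \<one>" and PS: "\<And>n. P (Suc n) = P n \<otimes> v (int n)" unfolding P_def by auto
  have M0: "M 0 = \<one>" and MS: "\<And>n. M (Suc n) = v (- int n - 1) \<otimes> M n" unfolding M_def by auto
  have Pc: "P n \<in> carrier G" for n by (induction n) (auto simp: P0 PS assms)
  have Mc: "M n \<in> carrier G" for n by (induction n) (auto simp: M0 MS assms)
  define \<omega> where "\<omega> i = (if 0 \<le> i then P (nat i) else inv (M (nat (- i))))" for i
  have c: "\<omega> i \<in> carrier G" for i unfolding \<omega>_def using Pc Mc by auto
  have s: "\<omega> (i + 1) = \<omega> i \<otimes> v i" for i
  proof (cases "0 \<le> i")
    case True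
    hence "nat (i + 1) = Suc (nat i)" by auto
    thus ?thesis unfolding \<omega>_def using True PS by auto
  next
    case False
    define n where "n = nat (- i - 1)"
    have n: "i = - int n - 1" using False unfolding n_def by simp
    hence ni: "nat (- i) = Suc n" by auto
    have "\<omega> i \<otimes> v i = inv (v i \<otimes> M n) \<otimes> v i" unfolding \<omega>_def using False ni MS n by simp
    also have "\<dots> = inv (M n)" using Mc assms by (simp add: inv_mult_group m_assoc)
    also have "\<dots> = \<omega> (i + 1)"
    proof (cases n)
      case 0 thus ?thesis unfolding \<omega>_def using n M0 P0 by simp
    next
      case (Suc n')
      hence "\<not> 0 \<le> i + 1" "nat (- (i + 1)) = n" using n by auto
      thus ?thesis unfolding \<omega>_def by simp
    qed
    finally show ?thesis by simp
  qed
  show ?thesis using c s by blast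
qed

context snk
begin

definition Nn :: nat where "Nn = Suc (Max Q)"
definition Qn :: "nat \<Rightarrow> nat \<Rightarrow> nat" where
  "Qn q c = (if c < 2 * length S then dstep Q \<delta> q (code_letter c) else 0)"
definition Cc :: "nat \<Rightarrow> nat \<Rightarrow> nat" where
  "Cc q c = (if c < 2 * length S then lcode (estep Q \<delta> \<eta> q (code_letter c)) else 2 * length T)"
definition Rl :: "nat list" where "Rl = (SOME l. set l = Rs)"
definition Fr :: "nat \<Rightarrow> nat" where "Fr = redF Nn Qn Cc Rl"

lemma set_Rl: "set Rl = Rs"
  unfolding Rl_def using finite_list[OF finite_Rs] by (rule someI_ex)

lemma Rs_lt: "q \<in> Rs \<Longrightarrow> q < Nn"
  unfolding Nn_def using Rs_Q Max_ge[OF finQ] by (simp add: le_imp_less_Suc)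

lemma Qn_lt: "q \<in> Rs \<Longrightarrow> Qn q c < Nn"
  unfolding Qn_def using Rs_dstep Rs_lt code_letter_less by (auto simp: Nn_def)

lemma divmod_Nn: "q < Nn \<Longrightarrow> (a * Nn + q) div Nn = a \<and> (a * Nn + q) mod Nn = q"
  by auto

lemma computable_Fr: "computable Fr"
  unfolding Fr_def
  by (rule rf1_computable, rule rf1_redF)
     (rule exI[of _ "2 * length S"], rule exI[of _ 0], rule exI[of _ "2 * length T"], simp add: Qn_def Cc_def)

lemma tedges_Fr: "t \<in> set (tedges (Fr n)) \<longleftrightarrow>
  (\<exists>a a' c q. (a, a', c) \<in> set (tedges n) \<and> q \<in> Rs \<and> t = (a * Nn + q, a' * Nn + Qn q c, Cc q c))"
  unfolding Fr_def tedges_redF set_Rl ..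

lemma valid_edge: "valid_tcode k n \<Longrightarrow> (a, a', c) \<in> set (tedges n) \<Longrightarrow> c < 2 * k \<and> (a', a, flip_code c) \<in> set (tedges n)"
  unfolding valid_tcode_def by fast

lemma valid_tcodeI: "(\<And>a a' c. (a, a', c) \<in> set (tedges n) \<Longrightarrow> c < 2 * k \<and> (a', a, flip_code c) \<in> set (tedges n)) \<Longrightarrow> valid_tcode k n"
  unfolding valid_tcode_def by fast

lemma Qn_eq: "c < 2 * length S \<Longrightarrow> Qn q c = dstep Q \<delta> q (code_letter c)"
  unfolding Qn_def by simp

lemma Cc_eq: "c < 2 * length S \<Longrightarrow> Cc q c = lcode (estep Q \<delta> \<eta> q (code_letter c))"
  unfolding Cc_def by simp

lemma valid_fwd:
  assumes v: "valid_tcode (length S) n"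
  shows "valid_tcode (length T) (Fr n)"
proof (rule valid_tcodeI)
  fix x y c' assume "(x, y, c') \<in> set (tedges (Fr n))"
  then obtain a a' c q where h: "(a, a', c) \<in> set (tedges n)" "q \<in> Rs" "(x, y, c') = (a * Nn + q, a' * Nn + Qn q c, Cc q c)"
    unfolding tedges_Fr by blast
  have c: "c < 2 * length S" and r: "(a', a, flip_code c) \<in> set (tedges n)" using valid_edge[OF v h(1)] by auto
  define l where "l = code_letter c"
  have l: "fst l < length S" unfolding l_def using c code_letter_less by auto
  have qQ: "q \<in> Q" using h(2) Rs_Q by auto
  define q' where "q' = dstep Q \<delta> q l"
  have q': "q' \<in> Rs" unfolding q'_def using Rs_dstep h(2) l by auto
  have c'1: "c' < 2 * length T" using h(3) Cc_eq[OF c] estep_fst[OF qQ l] lcode_less l_def by auto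
  have fc: "flip_code c < 2 * length S" using flip_less c .
  have "Qn q' (flip_code c) = q"
    unfolding Qn_eq[OF fc] code_letter_flip q'_def l_def[symmetric] using dstep_inv[OF qQ l] .
  moreover have "Cc q' (flip_code c) = flip_code c'"
    using h(3) Cc_eq[OF fc] Cc_eq[OF c] code_letter_flip estep_inv[OF qQ l] lcode_linv
    unfolding q'_def l_def by simp
  moreover have "Qn q c = q'" unfolding Qn_eq[OF c] q'_def l_def ..
  ultimately have "(a' * Nn + q', a * Nn + Qn q' (flip_code c), Cc q' (flip_code c)) = (y, x, flip_code c')"
    using h(3) by simp
  hence "(y, x, flip_code c') \<in> set (tedges (Fr n))" unfolding tedges_Fr using r q' by metis
  thus "c' < 2 * length T \<and> (y, x, flip_code c') \<in> set (tedges (Fr n))" using c'1 by simp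
qed

lemma valid_bwd:
  assumes v: "valid_tcode (length T) (Fr n)"
  shows "valid_tcode (length S) n"
proof (rule valid_tcodeI)
  fix a a' c assume e: "(a, a', c) \<in> set (tedges n)"
  hence "(a * Nn + q0, a' * Nn + Qn q0 c, Cc q0 c) \<in> set (tedges (Fr n))" unfolding tedges_Fr using q0_Rs by blast
  from valid_edge[OF v this] have c'1: "Cc q0 c < 2 * length T"
    and r: "(a' * Nn + Qn q0 c, a * Nn + q0, flip_code (Cc q0 c)) \<in> set (tedges (Fr n))" by auto
  have c: "c < 2 * length S" using c'1 unfolding Cc_def by (auto split: if_splits)
  define l where "l = code_letter c"
  have l: "fst l < length S" unfolding l_def using c code_letter_less by auto
  define q' where "q' = dstep Q \<delta> q0 l"
  have q': "q' \<in> Rs" unfolding q'_def using Rs_dstep q0_Rs l by auto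
  have Qq: "Qn q0 c = q'" unfolding Qn_eq[OF c] q'_def l_def ..
  obtain b b' d p where h: "(b, b', d) \<in> set (tedges n)" "p \<in> Rs"
    "(a' * Nn + Qn q0 c, a * Nn + q0, flip_code (Cc q0 c)) = (b * Nn + p, b' * Nn + Qn p d, Cc p d)"
    using r unfolding tedges_Fr by blast
  have "b = a' \<and> p = q'" using h(3) divmod_Nn[OF Rs_lt[OF q']] divmod_Nn[OF Rs_lt[OF h(2)]] Qq
    by (metis prod.inject)
  hence bp: "b = a'" "p = q'" by auto
  have "b' = a" using h(3) divmod_Nn[OF Qn_lt[OF h(2)]] divmod_Nn[OF Rs_lt[OF q0_Rs]]
    by (metis prod.inject)
  have fl: "flip_code (Cc q0 c) < 2 * length T" using flip_less c'1 .
  have d: "d < 2 * length S" using h(3) fl unfolding Cc_def by (auto split: if_splits)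
  have q0Q: "q0 \<in> Q" by (rule q0Q)
  have "lcode (estep Q \<delta> \<eta> q' (code_letter d)) = lcode (estep Q \<delta> \<eta> q' (linv l))"
    using h(3) bp Cc_eq[OF d] Cc_eq[OF c] estep_inv[OF q0Q l] lcode_linv unfolding q'_def l_def by simp
  hence "estep Q \<delta> \<eta> q' (code_letter d) = estep Q \<delta> \<eta> q' (linv l)" by (rule lcode_inj)
  moreover have "fst (code_letter d) < length S" using d code_letter_less by auto
  moreover have "fst (linv l) < length S" using l by (simp add: linv_def)
  ultimately have "code_letter d = linv l" using estep_inj[OF q'] by blast
  hence "d = flip_code c" using code_letter_flip code_letter_inj unfolding l_def by metis
  thus "c < 2 * length S \<and> (a', a, flip_code c) \<in> set (tedges n)" using h(1) bp \<open>b' = a\<close> c by simp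
qed

lemma valid_iff: "valid_tcode (length S) n \<longleftrightarrow> valid_tcode (length T) (Fr n)"
  using valid_fwd valid_bwd by blast

end

lemma linv_linv [simp]: "linv (linv l) = l" and fst_linv [simp]: "fst (linv l) = fst l"
  by (auto simp: linv_def)

context snk
begin

lemma transfer_int:
  assumes st: "\<forall>i. st i \<in> Rs" and L: "\<forall>i. fst (L i) < length S"
    and stp: "\<forall>i::int. st (i + 1) = dstep Q \<delta> (st i) (L i)"
    and wc: "\<forall>i. \<omega> i \<in> carrier G" and ws: "\<forall>i. \<omega> (i + 1) = \<omega> i \<otimes>\<^bsub>G\<^esub> lval G S (L i)"
    and wc': "\<forall>i. \<omega>' i \<in> carrier H" and ws': "\<forall>i. \<omega>' (i + 1) = \<omega>' i \<otimes>\<^bsub>H\<^esub> lval H T (estep Q \<delta> \<eta> (st i) (L i))"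
  shows "inj \<omega> \<longleftrightarrow> inj \<omega>'"
proof -
  have "\<omega> (i + of_nat n) = \<omega> i \<longleftrightarrow> \<omega>' (i + of_nat n) = \<omega>' i" for i n
    by (rule transfer) (use assms in auto)
  thus ?thesis unfolding inj_int_iff by simp
qed

lemma transfer_nat:
  fixes N :: nat
  assumes N: "0 < N" and st: "\<forall>i<N. st i \<in> Rs" and L: "\<forall>i<N. fst (L i) < length S"
    and stp: "\<forall>i<N. st (i + 1) = dstep Q \<delta> (st i) (L i)"
    and wc: "\<forall>i\<le>N. \<omega> i \<in> carrier G" and ws: "\<forall>i<N. \<omega> (i + 1) = \<omega> i \<otimes>\<^bsub>G\<^esub> lval G S (L i)"
    and wc': "\<forall>i\<le>N. \<omega>' i \<in> carrier H" and ws': "\<forall>i<N. \<omega>' (i + 1) = \<omega>' i \<otimes>\<^bsub>H\<^esub> lval H T (estep Q \<delta> \<eta> (st i) (L i))"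
  shows "(inj_on \<omega> {..<N} \<longleftrightarrow> inj_on \<omega>' {..<N}) \<and> (\<omega> N = \<omega> 0 \<longleftrightarrow> \<omega>' N = \<omega>' 0)"
proof -
  have T: "\<omega> (i + of_nat n) = \<omega> i \<longleftrightarrow> \<omega>' (i + of_nat n) = \<omega>' i" if "i + n \<le> N" "i < N" for i n :: nat
    by (rule transfer[where st=st and L=L and \<omega>=\<omega> and \<omega>'=\<omega>' and i=i and n=n]) (use assms that in auto)
  have "\<omega> N = \<omega> 0 \<longleftrightarrow> \<omega>' N = \<omega>' 0" using T[of 0 N] N by simp
  moreover have "inj_on \<omega> {..<N} \<longleftrightarrow> inj_on \<omega>' {..<N}"
    unfolding inj_on_nat_iff using T by (metis add_lessD1 less_imp_le of_nat_id)
  ultimately show ?thesis by blast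
qed

lemma int_states:
  assumes L: "\<forall>i. fst (L i) < length S"
  shows "\<exists>st. (\<forall>i. st i \<in> Rs) \<and> (\<forall>i::int. st (i + 1) = dstep Q \<delta> (st i) (L i))"
proof -
  define fw where "fw = rec_nat q0 (\<lambda>n q. dstep Q \<delta> q (L (int n)))"
  define bw where "bw = rec_nat q0 (\<lambda>n q. dstep Q \<delta> q (linv (L (- int n - 1))))"
  have f0: "fw 0 = q0" and fS: "\<And>n. fw (Suc n) = dstep Q \<delta> (fw n) (L (int n))" unfolding fw_def by auto
  have b0: "bw 0 = q0" and bS: "\<And>n. bw (Suc n) = dstep Q \<delta> (bw n) (linv (L (- int n - 1)))" unfolding bw_def by auto
  have fR: "fw n \<in> Rs" for n by (induction n) (auto simp: f0 fS q0_Rs Rs_dstep L)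
  have bR: "bw n \<in> Rs" for n by (induction n) (auto simp: b0 bS q0_Rs Rs_dstep L)
  define st where "st i = (if 0 \<le> i then fw (nat i) else bw (nat (- i)))" for i
  have "st i \<in> Rs" for i unfolding st_def using fR bR by auto
  moreover have "st (i + 1) = dstep Q \<delta> (st i) (L i)" for i
  proof (cases "0 \<le> i")
    case True
    hence "nat (i + 1) = Suc (nat i)" by auto
    thus ?thesis unfolding st_def using True fS by auto
  next
    case False
    define n where "n = nat (- i - 1)"
    have n: "i = - int n - 1" using False unfolding n_def by simp
    hence ni: "nat (- i) = Suc n" by auto
    have "dstep Q \<delta> (st i) (L i) = dstep Q \<delta> (dstep Q \<delta> (bw n) (linv (L i))) (linv (linv (L i)))"
      unfolding st_def using False ni bS n by simp
    also have "\<dots> = bw n" using dstep_inv[OF Rs_Q[OF bR[of n]], of "linv (L i)"] L by simp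
    also have "\<dots> = st (i + 1)"
    proof (cases n)
      case 0 thus ?thesis unfolding st_def using n f0 b0 by simp
    next
      case (Suc n')
      hence "\<not> 0 \<le> i + 1" "nat (- (i + 1)) = n" using n by auto
      thus ?thesis unfolding st_def by simp
    qed
    finally show ?thesis by simp
  qed
  ultimately show ?thesis by blast
qed

lemma step_of_inv: "group M \<Longrightarrow> a \<in> carrier M \<Longrightarrow> b \<in> carrier M \<Longrightarrow> x \<in> carrier M
   \<Longrightarrow> inv\<^bsub>M\<^esub> a \<otimes>\<^bsub>M\<^esub> b = x \<longleftrightarrow> b = a \<otimes>\<^bsub>M\<^esub> x"
  using group.inv_solve_left' by metis

end

context snk
begin

lemma edge_Fr:
  assumes "(a, a', c) \<in> set (tedges n)" "q \<in> Rs" "c < 2 * length S"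
  shows "(a * Nn + q, a' * Nn + dstep Q \<delta> q (code_letter c), Cc q c) \<in> set (tedges (Fr n))"
  unfolding tedges_Fr using assms Qn_eq[OF assms(3)] by metis

lemma edge_Fr_inv:
  assumes v: "valid_tcode (length S) n" and e: "(x, y, c') \<in> set (tedges (Fr n))"
  shows "\<exists>c. (x div Nn, y div Nn, c) \<in> set (tedges n) \<and> c < 2 * length S \<and> x mod Nn \<in> Rs
     \<and> y mod Nn = dstep Q \<delta> (x mod Nn) (code_letter c) \<and> code_letter c' = estep Q \<delta> \<eta> (x mod Nn) (code_letter c)"
proof -
  obtain a a' c q where h: "(a, a', c) \<in> set (tedges n)" "q \<in> Rs" "(x, y, c') = (a * Nn + q, a' * Nn + Qn q c, Cc q c)"
    using e unfolding tedges_Fr by blast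
  have c: "c < 2 * length S" using valid_edge[OF v h(1)] by auto
  have x: "x div Nn = a" "x mod Nn = q" using h(3) divmod_Nn[OF Rs_lt[OF h(2)]] by auto
  have y: "y div Nn = a'" "y mod Nn = Qn q c" using h(3) divmod_Nn[OF Qn_lt[OF h(2)]] by auto
  show ?thesis using h x y c Qn_eq[OF c] Cc_eq[OF c] by (intro exI[of _ c]) auto
qed

lemma snake_fwd:
  assumes v: "valid_tcode (length S) n" and hs: "has_infinite_snake G S n"
  shows "has_infinite_snake H T (Fr n)"
proof -
  obtain \<omega> :: "int \<Rightarrow> 'g" and \<zeta> where inj: "inj \<omega>" and rc: "range \<omega> \<subseteq> carrier G"
    and e: "\<forall>i. \<exists>c. (\<zeta> i, \<zeta> (i + 1), c) \<in> set (tedges n) \<and> inv\<^bsub>G\<^esub> (\<omega> i) \<otimes>\<^bsub>G\<^esub> \<omega> (i + 1) = lval G S (code_letter c)"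
    using hs unfolding has_infinite_snake_def by blast
  obtain cc where cc: "\<forall>i. (\<zeta> i, \<zeta> (i + 1), cc i) \<in> set (tedges n) \<and> inv\<^bsub>G\<^esub> (\<omega> i) \<otimes>\<^bsub>G\<^esub> \<omega> (i + 1) = lval G S (code_letter (cc i))"
    using choice[OF e] by blast
  define L where "L i = code_letter (cc i)" for i
  have ccl: "cc i < 2 * length S" for i using valid_edge[OF v] cc by blast
  have L: "\<forall>i. fst (L i) < length S" using ccl code_letter_less unfolding L_def by auto
  have wc: "\<forall>i. \<omega> i \<in> carrier G" using rc by auto
  have ws: "\<forall>i. \<omega> (i + 1) = \<omega> i \<otimes>\<^bsub>G\<^esub> lval G S (L i)"
  proof
    fix i
    have "inv\<^bsub>G\<^esub> (\<omega> i) \<otimes>\<^bsub>G\<^esub> \<omega> (i + 1) = lval G S (L i)" using cc unfolding L_def by blast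
    thus "\<omega> (i + 1) = \<omega> i \<otimes>\<^bsub>G\<^esub> lval G S (L i)"
      using step_of_inv[OF grpG] wc lval_carrier[OF grpG SG] L by blast
  qed
  obtain st where st: "\<forall>i. st i \<in> Rs" "\<forall>i. st (i + 1) = dstep Q \<delta> (st i) (L i)" using int_states[OF L] by blast
  define v where "v i = lval H T (estep Q \<delta> \<eta> (st i) (L i))" for i
  have vc: "\<forall>i. v i \<in> carrier H" unfolding v_def using lval_carrier[OF grpH TH] estep_fst Rs_Q st L by blast
  obtain \<omega>' where w'c: "\<forall>i. \<omega>' i \<in> carrier H" and w's: "\<forall>i::int. \<omega>' (i + 1) = \<omega>' i \<otimes>\<^bsub>H\<^esub> v i"
    using group.int_path[OF grpH vc] by blast
  have "inj \<omega>'" using transfer_int[OF st(1) L st(2) wc ws w'c] w's inj unfolding v_def by blast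
  moreover have "range \<omega>' \<subseteq> carrier H" using w'c by auto
  moreover have "\<forall>i. \<exists>c. (\<zeta> i * Nn + st i, \<zeta> (i + 1) * Nn + st (i + 1), c) \<in> set (tedges (Fr n))
      \<and> inv\<^bsub>H\<^esub> (\<omega>' i) \<otimes>\<^bsub>H\<^esub> \<omega>' (i + 1) = lval H T (code_letter c)"
  proof
    fix i
    have "(\<zeta> i * Nn + st i, \<zeta> (i + 1) * Nn + st (i + 1), Cc (st i) (cc i)) \<in> set (tedges (Fr n))"
      using edge_Fr[of "\<zeta> i" "\<zeta> (i + 1)" "cc i" n "st i"] cc st ccl unfolding L_def by metis
    moreover have "inv\<^bsub>H\<^esub> (\<omega>' i) \<otimes>\<^bsub>H\<^esub> \<omega>' (i + 1) = v i"
      using step_of_inv[OF grpH, of "\<omega>' i" "\<omega>' (i + 1)" "v i"] w'c vc w's by blast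
    hence "inv\<^bsub>H\<^esub> (\<omega>' i) \<otimes>\<^bsub>H\<^esub> \<omega>' (i + 1) = lval H T (code_letter (Cc (st i) (cc i)))"
      using Cc_eq[OF ccl] by (simp add: v_def L_def)
    ultimately show "\<exists>c. (\<zeta> i * Nn + st i, \<zeta> (i + 1) * Nn + st (i + 1), c) \<in> set (tedges (Fr n))
      \<and> inv\<^bsub>H\<^esub> (\<omega>' i) \<otimes>\<^bsub>H\<^esub> \<omega>' (i + 1) = lval H T (code_letter c)" by blast
  qed
  ultimately show ?thesis unfolding has_infinite_snake_def
    by (intro exI[of _ \<omega>'] exI[of _ "\<lambda>i. \<zeta> i * Nn + st i"]) blast
qed

lemma snake_bwd:
  assumes v: "valid_tcode (length S) n" and hs: "has_infinite_snake H T (Fr n)"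
  shows "has_infinite_snake G S n"
proof -
  obtain \<omega>' :: "int \<Rightarrow> 'h" and \<zeta>' where inj: "inj \<omega>'" and rc: "range \<omega>' \<subseteq> carrier H"
    and e: "\<forall>i. \<exists>c. (\<zeta>' i, \<zeta>' (i + 1), c) \<in> set (tedges (Fr n)) \<and> inv\<^bsub>H\<^esub> (\<omega>' i) \<otimes>\<^bsub>H\<^esub> \<omega>' (i + 1) = lval H T (code_letter c)"
    using hs unfolding has_infinite_snake_def by blast
  define A where "A i = \<zeta>' i div Nn" for i
  define st where "st i = \<zeta>' i mod Nn" for i
  have "\<forall>i. \<exists>c. (A i, A (i + 1), c) \<in> set (tedges n) \<and> c < 2 * length S \<and> st i \<in> Rs
     \<and> st (i + 1) = dstep Q \<delta> (st i) (code_letter c) \<and> inv\<^bsub>H\<^esub> (\<omega>' i) \<otimes>\<^bsub>H\<^esub> \<omega>' (i + 1) = lval H T (estep Q \<delta> \<eta> (st i) (code_letter c))"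
  proof
    fix i
    obtain c' where c': "(\<zeta>' i, \<zeta>' (i + 1), c') \<in> set (tedges (Fr n))" "inv\<^bsub>H\<^esub> (\<omega>' i) \<otimes>\<^bsub>H\<^esub> \<omega>' (i + 1) = lval H T (code_letter c')"
      using e by blast
    show "\<exists>c. (A i, A (i + 1), c) \<in> set (tedges n) \<and> c < 2 * length S \<and> st i \<in> Rs
     \<and> st (i + 1) = dstep Q \<delta> (st i) (code_letter c) \<and> inv\<^bsub>H\<^esub> (\<omega>' i) \<otimes>\<^bsub>H\<^esub> \<omega>' (i + 1) = lval H T (estep Q \<delta> \<eta> (st i) (code_letter c))"
      using edge_Fr_inv[OF v c'(1)] c'(2) unfolding A_def st_def by metis
  qed
  then obtain cc where cc: "\<forall>i. (A i, A (i + 1), cc i) \<in> set (tedges n) \<and> cc i < 2 * length S \<and> st i \<in> Rs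
     \<and> st (i + 1) = dstep Q \<delta> (st i) (code_letter (cc i)) \<and> inv\<^bsub>H\<^esub> (\<omega>' i) \<otimes>\<^bsub>H\<^esub> \<omega>' (i + 1) = lval H T (estep Q \<delta> \<eta> (st i) (code_letter (cc i)))"
    using choice by metis
  define L where "L i = code_letter (cc i)" for i
  have L: "\<forall>i. fst (L i) < length S" using cc code_letter_less unfolding L_def by auto
  have stR: "\<forall>i. st i \<in> Rs" and stp: "\<forall>i. st (i + 1) = dstep Q \<delta> (st i) (L i)" using cc unfolding L_def by auto
  have w'c: "\<forall>i. \<omega>' i \<in> carrier H" using rc by auto
  have ws': "\<forall>i. \<omega>' (i + 1) = \<omega>' i \<otimes>\<^bsub>H\<^esub> lval H T (estep Q \<delta> \<eta> (st i) (L i))"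
  proof
    fix i
    have "inv\<^bsub>H\<^esub> (\<omega>' i) \<otimes>\<^bsub>H\<^esub> \<omega>' (i + 1) = lval H T (estep Q \<delta> \<eta> (st i) (L i))" using cc unfolding L_def by blast
    moreover have "lval H T (estep Q \<delta> \<eta> (st i) (L i)) \<in> carrier H"
      using lval_carrier[OF grpH TH] estep_fst Rs_Q stR L by blast
    ultimately show "\<omega>' (i + 1) = \<omega>' i \<otimes>\<^bsub>H\<^esub> lval H T (estep Q \<delta> \<eta> (st i) (L i))"
      using step_of_inv[OF grpH] w'c by blast
  qed
  have vc: "\<forall>i. lval G S (L i) \<in> carrier G" using lval_carrier[OF grpG SG] L by blast
  obtain \<omega> where wc: "\<forall>i. \<omega> i \<in> carrier G" and ws: "\<forall>i::int. \<omega> (i + 1) = \<omega> i \<otimes>\<^bsub>G\<^esub> lval G S (L i)"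
    using group.int_path[OF grpG vc] by blast
  have "inj \<omega>" using transfer_int[OF stR L stp wc ws w'c ws'] inj by blast
  moreover have "range \<omega> \<subseteq> carrier G" using wc by auto
  moreover have "\<forall>i. \<exists>c. (A i, A (i + 1), c) \<in> set (tedges n) \<and> inv\<^bsub>G\<^esub> (\<omega> i) \<otimes>\<^bsub>G\<^esub> \<omega> (i + 1) = lval G S (code_letter c)"
  proof
    fix i
    have "inv\<^bsub>G\<^esub> (\<omega> i) \<otimes>\<^bsub>G\<^esub> \<omega> (i + 1) = lval G S (L i)"
      using step_of_inv[OF grpG] wc vc ws by blast
    thus "\<exists>c. (A i, A (i + 1), c) \<in> set (tedges n) \<and> inv\<^bsub>G\<^esub> (\<omega> i) \<otimes>\<^bsub>G\<^esub> \<omega> (i + 1) = lval G S (code_letter c)"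
      using cc unfolding L_def by blast
  qed
  ultimately show ?thesis unfolding has_infinite_snake_def
    by (intro exI[of _ \<omega>] exI[of _ A]) blast
qed

end

context snk
begin

lemma ouro_fwd:
  assumes v: "valid_tcode (length S) n" and hs: "has_ouroboros G S n"
  shows "has_ouroboros H T (Fr n)"
proof -
  obtain N where N: "3 \<le> N" and "\<exists>(\<omega> :: nat \<Rightarrow> 'g) (\<zeta> :: nat \<Rightarrow> nat). inj_on \<omega> {..<N} \<and> \<omega> N = \<omega> 0 \<and> (\<forall>i \<le> N. \<omega> i \<in> carrier G)
     \<and> (\<forall>i < N. \<exists>c. (\<zeta> i, \<zeta> (i + 1), c) \<in> set (tedges n)
              \<and> inv\<^bsub>G\<^esub> (\<omega> i) \<otimes>\<^bsub>G\<^esub> \<omega> (i + 1) = lval G S (code_letter c))"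
    by (insert hs[unfolded has_ouroboros_def], elim exE conjE, rule that, assumption, intro exI conjI, assumption+)
  then obtain \<omega> :: "nat \<Rightarrow> 'g" and \<zeta> :: "nat \<Rightarrow> nat" where inj: "inj_on \<omega> {..<N}" and cyc: "\<omega> N = \<omega> 0"
    and wc: "\<forall>i\<le>N. \<omega> i \<in> carrier G"
    and e: "\<forall>i<N. \<exists>c. (\<zeta> i, \<zeta> (i + 1), c) \<in> set (tedges n) \<and> inv\<^bsub>G\<^esub> (\<omega> i) \<otimes>\<^bsub>G\<^esub> \<omega> (i + 1) = lval G S (code_letter c)"
    by (elim exE conjE) (intro that)
  obtain cc0 where cc0: "\<forall>i. i < N \<longrightarrow> (\<zeta> i, \<zeta> (i + 1), cc0 i) \<in> set (tedges n) \<and> inv\<^bsub>G\<^esub> (\<omega> i) \<otimes>\<^bsub>G\<^esub> \<omega> (i + 1) = lval G S (code_letter (cc0 i))"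
    using choice[of "\<lambda>i c. i < N \<longrightarrow> (\<zeta> i, \<zeta> (i + 1), c) \<in> set (tedges n) \<and> inv\<^bsub>G\<^esub> (\<omega> i) \<otimes>\<^bsub>G\<^esub> \<omega> (i + 1) = lval G S (code_letter c)"] e
    by blast
  define cc where "cc i = cc0 (if i < N then i else 0)" for i
  have N0: "0 < N" using N by auto
  have cc: "\<forall>i<N. (\<zeta> i, \<zeta> (i + 1), cc i) \<in> set (tedges n) \<and> inv\<^bsub>G\<^esub> (\<omega> i) \<otimes>\<^bsub>G\<^esub> \<omega> (i + 1) = lval G S (code_letter (cc i))"
    using cc0 unfolding cc_def by auto
  have ccl: "cc i < 2 * length S" for i
  proof -
    have "(if i < N then i else 0) < N" using N0 by auto
    thus ?thesis using valid_edge[OF v] cc0 unfolding cc_def by blast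
  qed
  define L where "L i = code_letter (cc i)" for i
  have L: "\<forall>i. fst (L i) < length S" using ccl code_letter_less unfolding L_def by auto
  have ws: "\<forall>i<N. \<omega> (i + 1) = \<omega> i \<otimes>\<^bsub>G\<^esub> lval G S (L i)"
  proof (intro allI impI)
    fix i assume i: "i < N"
    have "inv\<^bsub>G\<^esub> (\<omega> i) \<otimes>\<^bsub>G\<^esub> \<omega> (i + 1) = lval G S (L i)" using cc i unfolding L_def by blast
    thus "\<omega> (i + 1) = \<omega> i \<otimes>\<^bsub>G\<^esub> lval G S (L i)"
      using step_of_inv[OF grpG, of "\<omega> i" "\<omega> (i + 1)" "lval G S (L i)"] wc i lval_carrier[OF grpG SG] L by auto
  qed
  define st where "st = rec_nat q0 (\<lambda>i q. dstep Q \<delta> q (L i))"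
  have st0: "st 0 = q0" and stS: "\<And>i. st (Suc i) = dstep Q \<delta> (st i) (L i)" unfolding st_def by auto
  have stR: "st i \<in> Rs" for i by (induction i) (auto simp: st0 stS q0_Rs Rs_dstep L)
  define v where "v i = lval H T (estep Q \<delta> \<eta> (st i) (L i))" for i
  have vc: "v i \<in> carrier H" for i unfolding v_def using lval_carrier[OF grpH TH] estep_fst Rs_Q stR L by blast
  define \<omega>' where "\<omega>' = rec_nat \<one>\<^bsub>H\<^esub> (\<lambda>i p. p \<otimes>\<^bsub>H\<^esub> v i)"
  have w'0: "\<omega>' 0 = \<one>\<^bsub>H\<^esub>" and w'S: "\<And>i. \<omega>' (Suc i) = \<omega>' i \<otimes>\<^bsub>H\<^esub> v i" unfolding \<omega>'_def by auto
  have w'c: "\<omega>' i \<in> carrier H" for i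
    by (induction i) (auto simp: w'0 w'S vc intro: monoid.m_closed group.is_monoid[OF grpH] monoid.one_closed)
  have tr: "(inj_on \<omega> {..<N} \<longleftrightarrow> inj_on \<omega>' {..<N}) \<and> (\<omega> N = \<omega> 0 \<longleftrightarrow> \<omega>' N = \<omega>' 0)"
    by (rule transfer_nat[OF N0]) (use stR L stS wc ws w'c w'S in \<open>auto simp: v_def\<close>)
  have edges: "\<forall>i<N. \<exists>c. (\<zeta> i * Nn + st i, \<zeta> (i + 1) * Nn + st (i + 1), c) \<in> set (tedges (Fr n))
      \<and> inv\<^bsub>H\<^esub> (\<omega>' i) \<otimes>\<^bsub>H\<^esub> \<omega>' (i + 1) = lval H T (code_letter c)"
  proof (intro allI impI)
    fix i assume i: "i < N"
    have "(\<zeta> i * Nn + st i, \<zeta> (i + 1) * Nn + st (i + 1), Cc (st i) (cc i)) \<in> set (tedges (Fr n))"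
      using edge_Fr[of "\<zeta> i" "\<zeta> (i + 1)" "cc i" n "st i"] cc i stR stS ccl unfolding L_def by simp
    moreover have "inv\<^bsub>H\<^esub> (\<omega>' i) \<otimes>\<^bsub>H\<^esub> \<omega>' (i + 1) = v i"
      using step_of_inv[OF grpH w'c w'c vc, of i "Suc i" i] w'S by simp
    hence "inv\<^bsub>H\<^esub> (\<omega>' i) \<otimes>\<^bsub>H\<^esub> \<omega>' (i + 1) = lval H T (code_letter (Cc (st i) (cc i)))"
      using Cc_eq[OF ccl] by (simp add: v_def L_def)
    ultimately show "\<exists>c. (\<zeta> i * Nn + st i, \<zeta> (i + 1) * Nn + st (i + 1), c) \<in> set (tedges (Fr n))
      \<and> inv\<^bsub>H\<^esub> (\<omega>' i) \<otimes>\<^bsub>H\<^esub> \<omega>' (i + 1) = lval H T (code_letter c)" by blast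
  qed
  show ?thesis unfolding has_ouroboros_def
    by (intro exI[of _ N] conjI N exI[of _ \<omega>'] exI[of _ "\<lambda>i. \<zeta> i * Nn + st i"])
       (use tr inj cyc w'c edges in auto)
qed

lemma ouro_bwd:
  assumes v: "valid_tcode (length S) n" and hs: "has_ouroboros H T (Fr n)"
  shows "has_ouroboros G S n"
proof -
  obtain N where N: "3 \<le> N" and "\<exists>(\<omega> :: nat \<Rightarrow> 'h) (\<zeta> :: nat \<Rightarrow> nat). inj_on \<omega> {..<N} \<and> \<omega> N = \<omega> 0 \<and> (\<forall>i \<le> N. \<omega> i \<in> carrier H)
     \<and> (\<forall>i < N. \<exists>c. (\<zeta> i, \<zeta> (i + 1), c) \<in> set (tedges (Fr n))
              \<and> inv\<^bsub>H\<^esub> (\<omega> i) \<otimes>\<^bsub>H\<^esub> \<omega> (i + 1) = lval H T (code_letter c))"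
    by (insert hs[unfolded has_ouroboros_def], elim exE conjE, rule that, assumption, intro exI conjI, assumption+)
  then obtain \<omega>' :: "nat \<Rightarrow> 'h" and \<zeta>' :: "nat \<Rightarrow> nat" where inj: "inj_on \<omega>' {..<N}" and cyc: "\<omega>' N = \<omega>' 0"
    and w'c: "\<forall>i\<le>N. \<omega>' i \<in> carrier H"
    and e: "\<forall>i<N. \<exists>c. (\<zeta>' i, \<zeta>' (i + 1), c) \<in> set (tedges (Fr n)) \<and> inv\<^bsub>H\<^esub> (\<omega>' i) \<otimes>\<^bsub>H\<^esub> \<omega>' (i + 1) = lval H T (code_letter c)"
    by (elim exE conjE) (intro that)
  define A where "A i = \<zeta>' i div Nn" for i
  define st where "st i = \<zeta>' i mod Nn" for i
  define P where "P i c \<longleftrightarrow> (A i, A (i + 1), c) \<in> set (tedges n) \<and> c < 2 * length S \<and> st i \<in> Rs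
     \<and> st (i + 1) = dstep Q \<delta> (st i) (code_letter c) \<and> inv\<^bsub>H\<^esub> (\<omega>' i) \<otimes>\<^bsub>H\<^esub> \<omega>' (i + 1) = lval H T (estep Q \<delta> \<eta> (st i) (code_letter c))" for i c
  have "\<forall>i. i < N \<longrightarrow> (\<exists>c. P i c)"
  proof (intro allI impI)
    fix i assume i: "i < N"
    obtain c' where c': "(\<zeta>' i, \<zeta>' (i + 1), c') \<in> set (tedges (Fr n))" "inv\<^bsub>H\<^esub> (\<omega>' i) \<otimes>\<^bsub>H\<^esub> \<omega>' (i + 1) = lval H T (code_letter c')"
      using e i by blast
    show "\<exists>c. P i c" unfolding P_def
      using edge_Fr_inv[OF v c'(1)] c'(2) unfolding A_def st_def by metis
  qed
  then obtain cc0 where cc0: "\<forall>i. i < N \<longrightarrow> P i (cc0 i)" using choice[of "\<lambda>i c. i < N \<longrightarrow> P i c"] by blast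
  define cc where "cc i = cc0 (if i < N then i else 0)" for i
  have N0: "0 < N" using N by auto
  have cc: "\<forall>i<N. P i (cc i)" using cc0 unfolding cc_def by auto
  have ccl: "cc i < 2 * length S" for i
  proof -
    have "(if i < N then i else 0) < N" using N0 by auto
    thus ?thesis using cc0 unfolding cc_def P_def by blast
  qed
  define L where "L i = code_letter (cc i)" for i
  have L: "\<forall>i. fst (L i) < length S" using ccl code_letter_less unfolding L_def by auto
  have stR: "\<forall>i<N. st i \<in> Rs" and stp: "\<forall>i<N. st (i + 1) = dstep Q \<delta> (st i) (L i)"
    using cc unfolding L_def P_def by auto
  have ws': "\<forall>i<N. \<omega>' (i + 1) = \<omega>' i \<otimes>\<^bsub>H\<^esub> lval H T (estep Q \<delta> \<eta> (st i) (L i))"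
  proof (intro allI impI)
    fix i assume i: "i < N"
    have "inv\<^bsub>H\<^esub> (\<omega>' i) \<otimes>\<^bsub>H\<^esub> \<omega>' (i + 1) = lval H T (estep Q \<delta> \<eta> (st i) (L i))" using cc i unfolding L_def P_def by blast
    moreover have "lval H T (estep Q \<delta> \<eta> (st i) (L i)) \<in> carrier H"
      using lval_carrier[OF grpH TH] estep_fst Rs_Q stR L i by blast
    ultimately show "\<omega>' (i + 1) = \<omega>' i \<otimes>\<^bsub>H\<^esub> lval H T (estep Q \<delta> \<eta> (st i) (L i))"
      using step_of_inv[OF grpH, of "\<omega>' i" "\<omega>' (i + 1)"] w'c i by auto
  qed
  have vc: "lval G S (L i) \<in> carrier G" for i using lval_carrier[OF grpG SG] L by blast
  define \<omega> where "\<omega> = rec_nat \<one>\<^bsub>G\<^esub> (\<lambda>i p. p \<otimes>\<^bsub>G\<^esub> lval G S (L i))"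
  have w0: "\<omega> 0 = \<one>\<^bsub>G\<^esub>" and wS: "\<And>i. \<omega> (Suc i) = \<omega> i \<otimes>\<^bsub>G\<^esub> lval G S (L i)" unfolding \<omega>_def by auto
  have wc: "\<omega> i \<in> carrier G" for i
    by (induction i) (auto simp: w0 wS vc intro: monoid.m_closed group.is_monoid[OF grpG] monoid.one_closed)
  have tr: "(inj_on \<omega> {..<N} \<longleftrightarrow> inj_on \<omega>' {..<N}) \<and> (\<omega> N = \<omega> 0 \<longleftrightarrow> \<omega>' N = \<omega>' 0)"
    by (rule transfer_nat[OF N0]) (use stR L stp wc wS w'c ws' in auto)
  have edges: "\<forall>i<N. \<exists>c. (A i, A (i + 1), c) \<in> set (tedges n) \<and> inv\<^bsub>G\<^esub> (\<omega> i) \<otimes>\<^bsub>G\<^esub> \<omega> (i + 1) = lval G S (code_letter c)"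
  proof (intro allI impI)
    fix i assume i: "i < N"
    have "inv\<^bsub>G\<^esub> (\<omega> i) \<otimes>\<^bsub>G\<^esub> \<omega> (i + 1) = lval G S (L i)"
      using step_of_inv[OF grpG wc wc vc, of i "Suc i" i] wS by simp
    thus "\<exists>c. (A i, A (i + 1), c) \<in> set (tedges n) \<and> inv\<^bsub>G\<^esub> (\<omega> i) \<otimes>\<^bsub>G\<^esub> \<omega> (i + 1) = lval G S (code_letter c)"
      using cc i unfolding L_def P_def by blast
  qed
  show ?thesis unfolding has_ouroboros_def
    by (intro exI[of _ N] conjI N exI[of _ \<omega>] exI[of _ A])
       (use tr inj cyc wc edges in auto)
qed

lemma red_isp: "n \<in> infinite_snake_problem G S \<longleftrightarrow> Fr n \<in> infinite_snake_problem H T"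
  unfolding infinite_snake_problem_def using valid_iff snake_fwd snake_bwd by auto

lemma red_ouro: "n \<in> ouroboros_problem G S \<longleftrightarrow> Fr n \<in> ouroboros_problem H T"
  unfolding ouroboros_problem_def using valid_iff ouro_fwd ouro_bwd by auto

end

theorem proposition7:
  fixes G :: "('g, 'a) monoid_scheme" and S :: "'g list"
    and H :: "('h, 'b) monoid_scheme" and T :: "'h list"
    and \<phi> :: "'g \<Rightarrow> 'h"
  assumes "fg_group G S" and "fg_group H T"
    and "snake_embedding G S H T \<phi>"
  shows "m_reducible (infinite_snake_problem G S) (infinite_snake_problem H T)
       \<and> m_reducible (ouroboros_problem G S) (ouroboros_problem H T)"
proof -
  have g: "group G" "distinct S" "set S \<subseteq> carrier G" using assms(1) unfolding fg_group_def by auto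
  have h: "group H" "set T \<subseteq> carrier H" using assms(2) unfolding fg_group_def by auto
  obtain Q q0 \<delta> \<eta> where irt: "is_irt (length S) (length T) Q q0 \<delta> \<eta>"
    and emb: "\<forall>w \<in> words (length S). \<forall>w' \<in> words (length S).
          word_val H T (frun Q \<delta> \<eta> q0 w) = word_val H T (frun Q \<delta> \<eta> q0 w')
          \<longleftrightarrow> word_val G S w = word_val G S w'"
    by (insert assms(3)[unfolded snake_embedding_def], elim exE conjE, rule that, assumption+)
  interpret snk G S H T Q q0 \<delta> \<eta>
    by (rule snk.intro[OF g(1) h(1) g(2) g(3) h(2) irt emb])
  show ?thesis unfolding m_reducible_def using computable_Fr red_isp red_ouro by blast
qed

end
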